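(* In the setting of the context, assume $u$ and $\hat u=u+v$ are quasidefinite, the functionals $(\beta^{(j)}_m)_x$ are linearly independent (in the sense of the context), and that at least one of $(\operatorname{Ker}^R_\beta)^{\perp^R_u}=\{0_p\}$ or $\mathbb I^{\perp^L_u}=\{0_p\}$ holds. Then for every $n\ge0$ the $Np\times Np$ matrix $M_n:=I_{Np}+\langle\mathcal J^{[0,1]}_{K_n}(x),(\beta)_x\rangle$ is nonsingular, and for every $n\ge1$ $$\hat P^{[1]}_n(x)=P^{[1]}_n(x)-\langle P^{[1]}_n(x),(\beta)_x\rangle\,M_{n-1}^{-1}\,\mathcal J^{[0,1]}_{K_{n-1}}(x),$$ $$(\hat P^{[2]}_n(y))^\top=(P^{[2]}_n(y))^\top-\langle K_{n-1}(x,y),(\beta)_x\rangle\,M_{n-1}^{-1}\,\big(\mathcal J_{P^{[2]}_n}\big)^\top,$$ $$\hat H_n=H_n+\langle P^{[1]}_n(x),(\beta)_x\rangle\,M_{n-1}^{-1}\,\big(\mathcal J_{P^{[2]}_n}\big)^\top .$$ Equivalently, with the quasideterminant $\Theta_*\begin{bmatrix}A&B\\C&D\end{bmatrix}=D-CA^{-1}B$: $\hat P^{[1]}_n(x)=\Theta_*\begin{bmatrix}M_{n-1}&\mathcal J^{[0,1]}_{K_{n-1}}(x)\\ \langle P^{[1]}_n(x),(\beta)_x\rangle&P^{[1]}_n(x)\end{bmatrix}$, $(\hat P^{[2]}_n(y))^\top=\Theta_*\begin{bmatrix}M_{n-1}&(\mathcal J_{P^{[2]}_n})^\top\\ \langle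 K_{n-1}(x,y),(\beta)_x\rangle&(P^{[2]}_n(y))^\top\end{bmatrix}$, $\hat H_n=\Theta_*\begin{bmatrix}M_{n-1}&-(\mathcal J_{P^{[2]}_n})^\top\\ \langle P^{[1]}_n(x),(\beta)_x\rangle&H_n\end{bmatrix}$.
   Context: Fix $p\ge1$; ${}^\top$ is transpose. A matrix of generalized kernels $w_{x,y}$ ($p\times p$ matrix of continuous linear functionals on $\mathbb C[x,y]$) defines $\langle P(x),Q(y)\rangle_w\in\mathbb C^{p\times p}$, $(\langle P,Q\rangle_w)_{i,j}=\sum_{k,l}\langle (w_{x,y})_{k,l},P_{i,k}(x)Q_{j,l}(y)\rangle$. It is quasidefinite if all leading block truncations of its Gram matrix $(\langle I_px^k,I_py^l\rangle_w)_{k,l\ge0}$ are nonsingular; then the unique factorization $G=S_1^{-1}HS_2^{-\top}$ ($S_i$ block lower unitriangular, $H=\operatorname{diag}(H_0,H_1,\dots)$) gives monic biorthogonal families $P^{[i]}_n(x)=\sum_{k\le n}(S_i)_{n,k}x^k$ with $\langle P^{[1]}_n,P^{[2]}_m\rangle_w=\delta_{n,m}H_n$, and Christoffel--Darboux kernels $K_n(x,y)=\sum_{k=0}^n(P^{[2]}_k(y))^\top H_k^{-1}P^{[1]}_k(x)$. Objects for $u$ are unhatted, for $\hat u=u+v$ hatted. When an argument depends on another variable (e.g. $K_{n-1}(x,y)$ in the first slot), the other variable is held fixed as a parameter. Uvarov data: distinct real $x_1,\dots,x_q$, positive integers $\kappa^{(j)}$, $N=\sum_j\kappa^{(j)}$;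 for each $j$ and $0\le m\le\kappa^{(j)}-1$ a $p\times p$ matrix $(\beta^{(j)}_m)_x$ of continuous linear functionals on $\mathbb C[x]$. For such $\beta_x$ and $P\in\mathbb C^{p\times p}[x]$: $(\langle P(x),\beta_x\rangle)_{i,l}=\sum_k\langle(\beta_x)_{k,l},P_{i,k}\rangle$ and $(\langle \beta_x,P(x)\rangle)_{k,j}=\sum_l\langle(\beta_x)_{k,l},P_{l,j}\rangle$. Linear independence means: if $X^{(j)}_m\in\mathbb C^{p\times p}$ satisfy $\sum_{j,m}(\beta^{(j)}_m)_xX^{(j)}_m=0$ (matrix product) then all $X^{(j)}_m=0_p$, and if $\sum_{j,m}Y^{(j)}_m(\beta^{(j)}_m)_x=0$ then all $Y^{(j)}_m=0_p$. The perturbation $v_{x,y}=\sum_{j}\sum_{m}\frac{(-1)^m}{m!}(\beta^{(j)}_m)_x\otimes\delta^{(m)}(y-x_j)$ has form $\langle P(x),Q(y)\rangle_v=\sum_{j=1}^q\sum_{m=0}^{\kappa^{(j)}-1}\frac1{m!}\langle P(x),(\beta^{(j)}_m)_x\rangle(Q^{(m)}(x_j))^\top$. Jets: $\mathcal J_f=\big[f(x_1),\tfrac{f'(x_1)}{1!},\dots,\tfrac{f^{(\kappa^{(1)}-1)}(x_1)}{(\kappa^{(1)}-1)!},\dots,f(x_q),\dots,\tfrac{f^{(\kappa^{(q)}-1)}(x_q)}{(\kappa^{(q)}-1)!}\big]\in\mathbb C^{p\times Np}$; $\mathcal J^{[0,1]}_K(x)\in\mathbb C^{Np\times p}$ is the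 block column with blocks, same order, $\frac1{m!}\partial_y^mK(x,y)|_{y=x_j}$. $\langle P(x),(\beta)_x\rangle\in\mathbb C^{p\times Np}$ is the block row $[\langle P,(\beta^{(1)}_0)_x\rangle,\dots,\langle P,(\beta^{(1)}_{\kappa^{(1)}-1})_x\rangle,\dots,\langle P,(\beta^{(q)}_{\kappa^{(q)}-1})_x\rangle]$; for a block column $F(x)$ of $N$ matrix polynomials $F_1,\dots,F_N$, $\langle F(x),(\beta)_x\rangle\in\mathbb C^{Np\times Np}$ has $r$-th block row $\langle F_r(x),(\beta)_x\rangle$. Subspaces: $\operatorname{Ker}^R_\beta=\{P\in\mathbb C^{p\times p}[x]:\langle(\beta^{(j)}_m)_x,P(x)\rangle=0_p\ \text{for all } j,m\}$; $\mathbb I=(x-x_1)^{\kappa^{(1)}}\cdots(x-x_q)^{\kappa^{(q)}}\mathbb C^{p\times p}[x]$. For a set $S$ of matrix polynomials, $S^{\perp^R_u}=\{Q:\langle P(x),Q(y)\rangle_u=0_p\ \forall P\in S\}$ and $S^{\perp^L_u}=\{Q:\langle Q(x),P(y)\rangle_u=0_p\ \forall P\in S\}$. *)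

theory Defs
  imports "Jordan_Normal_Form.Determinant" "HOL-Computational_Algebra.Polynomial"
begin

(* ---------------------------------------------------------------------------
   Conventions.
   * p x p matrix polynomials  P(x) \<in> C^{p x p}[x]  are  complex poly mat  in carrier_mat p p.
   * A p x p matrix of linear functionals on C[x] (e.g. (beta^{(j)}_m)_x) is represented by its
     moment blocks  B :: nat => complex mat,  (B r)$$(k,l) = < (beta)_{k,l}, x^r >.
   * A p x p matrix of linear functionals on C[x,y] (generalized kernel w_{x,y}) is represented by
     its moment blocks  G :: nat => nat => complex mat,  (G a b)$$(k,l) = < (w)_{k,l}, x^a y^b >,
     i.e. exactly its block Gram matrix  G a b = < I_p x^a, I_p y^b >_w.
   * Bivariate scalar polynomials in (x,y) are  complex poly poly : outer variable y, inner x.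
   --------------------------------------------------------------------------- *)

definition mdeg :: "complex poly mat \<Rightarrow> nat" where
  "mdeg P = Max (insert 0 {degree (P $$ (i,j)) | i j. i < dim_row P \<and> j < dim_col P})"

definition meval :: "complex poly mat \<Rightarrow> complex \<Rightarrow> complex mat" where
  "meval P z = map_mat (\<lambda>a. poly a z) P"

definition mderiv :: "nat \<Rightarrow> complex poly mat \<Rightarrow> complex poly mat" where
  "mderiv m P = map_mat (\<lambda>a. (pderiv ^^ m) a) P"

definition const_pmat :: "complex mat \<Rightarrow> complex poly mat" where
  "const_pmat A = map_mat (\<lambda>c. [:c:]) A"

definition monomI :: "nat \<Rightarrow> nat \<Rightarrow> complex poly mat" where
  "monomI p k = mat p p (\<lambda>(i,j). if i = j then monom 1 k else 0)"

definition minv :: "complex mat \<Rightarrow> complex mat" where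
  "minv A = (THE B. B \<in> carrier_mat (dim_row A) (dim_row A) \<and> A * B = 1\<^sub>m (dim_row A)
                    \<and> B * A = 1\<^sub>m (dim_row A))"

text \<open>sesquilinear-free matrix form  <P(x),Q(y)>_w  of a generalized kernel given by moments G\<close>
definition mform :: "nat \<Rightarrow> (nat \<Rightarrow> nat \<Rightarrow> complex mat) \<Rightarrow> complex poly mat \<Rightarrow> complex poly mat \<Rightarrow> complex mat" where
  "mform p G P Q = mat p p (\<lambda>(i,j). \<Sum>k<p. \<Sum>l<p. \<Sum>a\<le>mdeg P. \<Sum>b\<le>mdeg Q.
       coeff (P $$ (i,k)) a * coeff (Q $$ (j,l)) b * (G a b) $$ (k,l))"

definition pairR :: "nat \<Rightarrow> complex poly mat \<Rightarrow> (nat \<Rightarrow> complex mat) \<Rightarrow> complex mat" where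
  "pairR p P B = mat p p (\<lambda>(i,l). \<Sum>k<p. \<Sum>r\<le>mdeg P. coeff (P $$ (i,k)) r * (B r) $$ (k,l))"

definition pairL :: "nat \<Rightarrow> (nat \<Rightarrow> complex mat) \<Rightarrow> complex poly mat \<Rightarrow> complex mat" where
  "pairL p B P = mat p p (\<lambda>(k,j). \<Sum>l<p. \<Sum>r\<le>mdeg P. (B r) $$ (k,l) * coeff (P $$ (l,j)) r)"

text \<open>ordered list of block indices (j,m): (1,0),..,(1,kappa_1-1),...,(q,kappa_q-1) (0-based j)\<close>
definition bidx :: "nat \<Rightarrow> (nat \<Rightarrow> nat) \<Rightarrow> (nat \<times> nat) list" where
  "bidx q \<kappa> = concat (map (\<lambda>j. map (\<lambda>m. (j,m)) [0..<\<kappa> j]) [0..<q])"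

definition NN :: "nat \<Rightarrow> (nat \<Rightarrow> nat) \<Rightarrow> nat" where
  "NN q \<kappa> = length (bidx q \<kappa>)"

definition vform :: "nat \<Rightarrow> nat \<Rightarrow> (nat \<Rightarrow> real) \<Rightarrow> (nat \<Rightarrow> nat) \<Rightarrow> (nat \<Rightarrow> nat \<Rightarrow> nat \<Rightarrow> complex mat)
                      \<Rightarrow> complex poly mat \<Rightarrow> complex poly mat \<Rightarrow> complex mat" where
  "vform p q xs \<kappa> \<beta> P Q = mat p p (\<lambda>(i,l). \<Sum>jm\<leftarrow>bidx q \<kappa>. (case jm of (j,m) \<Rightarrow>
       (1 / of_nat (fact m)) * (pairR p P (\<beta> j m) * transpose_mat (meval (mderiv m Q) (of_real (xs j)))) $$ (i,l)))"

definition uhat :: "nat \<Rightarrow> nat \<Rightarrow> (nat \<Rightarrow> real) \<Rightarrow> (nat \<Rightarrow> nat) \<Rightarrow> (nat \<Rightarrow> nat \<Rightarrow> nat \<Rightarrow> complex mat)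
                    \<Rightarrow> (nat \<Rightarrow> nat \<Rightarrow> complex mat) \<Rightarrow> nat \<Rightarrow> nat \<Rightarrow> complex mat" where
  "uhat p q xs \<kappa> \<beta> G a b = G a b + vform p q xs \<kappa> \<beta> (monomI p a) (monomI p b)"

definition gram_trunc :: "nat \<Rightarrow> (nat \<Rightarrow> nat \<Rightarrow> complex mat) \<Rightarrow> nat \<Rightarrow> complex mat" where
  "gram_trunc p G n = mat ((n+1)*p) ((n+1)*p) (\<lambda>(i,j). (G (i div p) (j div p)) $$ (i mod p, j mod p))"

definition quasidefinite :: "nat \<Rightarrow> (nat \<Rightarrow> nat \<Rightarrow> complex mat) \<Rightarrow> bool" where
  "quasidefinite p G \<longleftrightarrow> (\<forall>n. det (gram_trunc p G n) \<noteq> 0)"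

definition block_lower_unitri :: "nat \<Rightarrow> (nat \<Rightarrow> nat \<Rightarrow> complex mat) \<Rightarrow> bool" where
  "block_lower_unitri p S \<longleftrightarrow> (\<forall>n k. S n k \<in> carrier_mat p p) \<and> (\<forall>n. S n n = 1\<^sub>m p)
      \<and> (\<forall>n k. n < k \<longrightarrow> S n k = 0\<^sub>m p p)"

text \<open>G = S1^{-1} H S2^{-T}, H block diagonal; equivalently S1 G S2^T = H (all sums finite)\<close>
definition gauss_factorization :: "nat \<Rightarrow> (nat \<Rightarrow> nat \<Rightarrow> complex mat) \<Rightarrow> (nat \<Rightarrow> nat \<Rightarrow> complex mat)
     \<Rightarrow> (nat \<Rightarrow> complex mat) \<Rightarrow> (nat \<Rightarrow> nat \<Rightarrow> complex mat) \<Rightarrow> bool" where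
  "gauss_factorization p G S1 H S2 \<longleftrightarrow> block_lower_unitri p S1 \<and> block_lower_unitri p S2
     \<and> (\<forall>n. H n \<in> carrier_mat p p)
     \<and> (\<forall>n m. mat p p (\<lambda>(i,j). \<Sum>k\<le>n. \<Sum>l\<le>m. (S1 n k * G k l * transpose_mat (S2 m l)) $$ (i,j))
              = (if n = m then H n else 0\<^sub>m p p))"

definition bpoly :: "nat \<Rightarrow> (nat \<Rightarrow> nat \<Rightarrow> complex mat) \<Rightarrow> nat \<Rightarrow> complex poly mat" where
  "bpoly p S n = mat p p (\<lambda>(i,j). \<Sum>k\<le>n. monom ((S n k) $$ (i,j)) k)"

text \<open>Christoffel--Darboux kernel K_n(x,y) = sum_{k<=n} (P2_k(y))^T H_k^{-1} P1_k(x),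
  entries in complex poly poly (outer variable y, inner variable x)\<close>
definition CDkernel :: "nat \<Rightarrow> (nat \<Rightarrow> nat \<Rightarrow> complex mat) \<Rightarrow> (nat \<Rightarrow> complex mat) \<Rightarrow> (nat \<Rightarrow> nat \<Rightarrow> complex mat)
                        \<Rightarrow> nat \<Rightarrow> complex poly poly mat" where
  "CDkernel p S1 H S2 n = mat p p (\<lambda>(i,j). \<Sum>k\<le>n. \<Sum>a<p. \<Sum>b<p.
       map_poly (\<lambda>c. [:c:]) ((bpoly p S2 k) $$ (a,i)) * [: [: (minv (H k)) $$ (a,b) :] :]
       * [: (bpoly p S1 k) $$ (b,j) :])"

definition kernel_at_y :: "complex poly poly mat \<Rightarrow> complex \<Rightarrow> complex poly mat" where
  "kernel_at_y K z = map_mat (\<lambda>e. poly e [:z:]) K"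

definition jet :: "nat \<Rightarrow> nat \<Rightarrow> (nat \<Rightarrow> real) \<Rightarrow> (nat \<Rightarrow> nat) \<Rightarrow> complex poly mat \<Rightarrow> complex mat" where
  "jet p q xs \<kappa> f = mat p (NN q \<kappa> * p) (\<lambda>(i,c). case bidx q \<kappa> ! (c div p) of (j,m) \<Rightarrow>
       poly ((pderiv ^^ m) (f $$ (i, c mod p))) (of_real (xs j)) / of_nat (fact m))"

definition jet01 :: "nat \<Rightarrow> nat \<Rightarrow> (nat \<Rightarrow> real) \<Rightarrow> (nat \<Rightarrow> nat) \<Rightarrow> complex poly poly mat \<Rightarrow> complex poly mat" where
  "jet01 p q xs \<kappa> K = mat (NN q \<kappa> * p) p (\<lambda>(c,l). case bidx q \<kappa> ! (c div p) of (j,m) \<Rightarrow>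
       smult (1 / of_nat (fact m)) (poly ((pderiv ^^ m) (K $$ (c mod p, l))) [: of_real (xs j) :]))"

definition pair_row :: "nat \<Rightarrow> nat \<Rightarrow> (nat \<Rightarrow> nat) \<Rightarrow> (nat \<Rightarrow> nat \<Rightarrow> nat \<Rightarrow> complex mat)
                        \<Rightarrow> complex poly mat \<Rightarrow> complex mat" where
  "pair_row p q \<kappa> \<beta> P = mat p (NN q \<kappa> * p) (\<lambda>(i,c). case bidx q \<kappa> ! (c div p) of (j,m) \<Rightarrow>
       (pairR p P (\<beta> j m)) $$ (i, c mod p))"

definition block_of_col :: "nat \<Rightarrow> complex poly mat \<Rightarrow> nat \<Rightarrow> complex poly mat" where
  "block_of_col p F r = mat p p (\<lambda>(i,l). F $$ (r*p + i, l))"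

definition pair_col :: "nat \<Rightarrow> nat \<Rightarrow> (nat \<Rightarrow> nat) \<Rightarrow> (nat \<Rightarrow> nat \<Rightarrow> nat \<Rightarrow> complex mat)
                        \<Rightarrow> complex poly mat \<Rightarrow> complex mat" where
  "pair_col p q \<kappa> \<beta> F = mat (NN q \<kappa> * p) (NN q \<kappa> * p) (\<lambda>(c,d).
       (pair_row p q \<kappa> \<beta> (block_of_col p F (c div p))) $$ (c mod p, d))"

definition Mmat :: "nat \<Rightarrow> nat \<Rightarrow> (nat \<Rightarrow> real) \<Rightarrow> (nat \<Rightarrow> nat) \<Rightarrow> (nat \<Rightarrow> nat \<Rightarrow> nat \<Rightarrow> complex mat)
      \<Rightarrow> (nat \<Rightarrow> nat \<Rightarrow> complex mat) \<Rightarrow> (nat \<Rightarrow> complex mat) \<Rightarrow> (nat \<Rightarrow> nat \<Rightarrow> complex mat) \<Rightarrow> nat \<Rightarrow> complex mat" where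
  "Mmat p q xs \<kappa> \<beta> S1 H S2 n = 1\<^sub>m (NN q \<kappa> * p)
      + pair_col p q \<kappa> \<beta> (jet01 p q xs \<kappa> (CDkernel p S1 H S2 n))"

definition beta_lin_indep :: "nat \<Rightarrow> nat \<Rightarrow> (nat \<Rightarrow> nat) \<Rightarrow> (nat \<Rightarrow> nat \<Rightarrow> nat \<Rightarrow> complex mat) \<Rightarrow> bool" where
  "beta_lin_indep p q \<kappa> \<beta> \<longleftrightarrow>
     (\<forall>X. (\<forall>j<q. \<forall>m<\<kappa> j. X j m \<in> carrier_mat p p)
        \<longrightarrow> (\<forall>r. \<forall>i<p. \<forall>l<p. (\<Sum>jm\<leftarrow>bidx q \<kappa>. (case jm of (j,m) \<Rightarrow> (\<beta> j m r * X j m) $$ (i,l))) = 0)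
        \<longrightarrow> (\<forall>j<q. \<forall>m<\<kappa> j. X j m = 0\<^sub>m p p))
   \<and> (\<forall>Y. (\<forall>j<q. \<forall>m<\<kappa> j. Y j m \<in> carrier_mat p p)
        \<longrightarrow> (\<forall>r. \<forall>i<p. \<forall>l<p. (\<Sum>jm\<leftarrow>bidx q \<kappa>. (case jm of (j,m) \<Rightarrow> (Y j m * \<beta> j m r) $$ (i,l))) = 0)
        \<longrightarrow> (\<forall>j<q. \<forall>m<\<kappa> j. Y j m = 0\<^sub>m p p))"

definition KerR :: "nat \<Rightarrow> nat \<Rightarrow> (nat \<Rightarrow> nat) \<Rightarrow> (nat \<Rightarrow> nat \<Rightarrow> nat \<Rightarrow> complex mat) \<Rightarrow> complex poly mat set" where
  "KerR p q \<kappa> \<beta> = {P \<in> carrier_mat p p. \<forall>j<q. \<forall>m<\<kappa> j. pairL p (\<beta> j m) P = 0\<^sub>m p p}"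

definition Iideal :: "nat \<Rightarrow> nat \<Rightarrow> (nat \<Rightarrow> real) \<Rightarrow> (nat \<Rightarrow> nat) \<Rightarrow> complex poly mat set" where
  "Iideal p q xs \<kappa> = {map_mat (\<lambda>e. (\<Prod>j<q. [: - of_real (xs j), 1 :] ^ \<kappa> j) * e) R | R. R \<in> carrier_mat p p}"

definition perpR :: "nat \<Rightarrow> (nat \<Rightarrow> nat \<Rightarrow> complex mat) \<Rightarrow> complex poly mat set \<Rightarrow> complex poly mat set" where
  "perpR p G S = {Q \<in> carrier_mat p p. \<forall>P\<in>S. mform p G P Q = 0\<^sub>m p p}"

definition perpL :: "nat \<Rightarrow> (nat \<Rightarrow> nat \<Rightarrow> complex mat) \<Rightarrow> complex poly mat set \<Rightarrow> complex poly mat set" where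
  "perpL p G S = {Q \<in> carrier_mat p p. \<forall>P\<in>S. mform p G Q P = 0\<^sub>m p p}"

end

theory Submission
  imports Defs
begin

lemma minv_props:
  assumes A: "A \<in> carrier_mat n n" and d: "det A \<noteq> 0"
  shows "minv A \<in> carrier_mat n n \<and> A * minv A = 1\<^sub>m n \<and> minv A * A = 1\<^sub>m n"
proof -
  from det_non_zero_imp_unit[OF A d, of "()"]
  obtain B where B: "B \<in> carrier_mat n n" "A * B = 1\<^sub>m n" "B * A = 1\<^sub>m n"
    unfolding Units_def ring_mat_def by auto
  have dr: "dim_row A = n" using A by auto
  have uniq: "C = B" if C: "C \<in> carrier_mat n n" "A * C = 1\<^sub>m n" "C * A = 1\<^sub>m n" for C
  proof -
    have "C = C * (A * B)" using C B by auto
    also have "\<dots> = (C * A) * B" by (rule assoc_mult_mat[OF C(1) A B(1), symmetric])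
    also have "\<dots> = B" using C(3) B(1) by simp
    finally show ?thesis .
  qed
  have "minv A = B" unfolding minv_def dr
    apply (rule the_equality)
    using B apply simp
    using uniq by blast
  thus ?thesis using B by auto
qed

lemma sum_blocks: "(\<Sum>r<n*p. f r) = (\<Sum>a<n. \<Sum>s<p. f (a*p+s :: nat)) "
proof (induction n)
  case 0 then show ?case by simp
next
  case (Suc n)
  have "(\<Sum>r<Suc n*p. f r) = (\<Sum>r<n*p. f r) + (\<Sum>r=n*p..<n*p+p. f r)"
    by (simp add: sum.atLeastLessThan_concat[symmetric] lessThan_atLeast0 add.commute)
  also have "(\<Sum>r=n*p..<n*p+p. f r) = (\<Sum>s<p. f (n*p+s))"
    by (simp add: sum.shift_bounds_nat_ivl[symmetric] lessThan_atLeast0 add.commute)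
  finally show ?case using Suc by simp
qed

lemma sum_blocks': "(\<Sum>r<(N+1)*p. f r) = (\<Sum>a\<le>N. \<Sum>s<p. f (a*p+s :: nat)) "
  using sum_blocks[where n="N+1" and p=p and f=f] by (simp add: lessThan_Suc_atMost)

lemma mult2_idx: "A \<in> carrier_mat a b \<Longrightarrow> B \<in> carrier_mat b c \<Longrightarrow> i < a \<Longrightarrow> j < c \<Longrightarrow>
   (A * B) $$ (i,j) = (\<Sum>s<b. A $$ (i,s) * B $$ (s,j))"
  by (auto simp: scalar_prod_def atLeast0LessThan intro: sum.cong)

lemma mult3_idx: assumes A: "A \<in> carrier_mat a b" and B: "B \<in> carrier_mat b c" and C: "C \<in> carrier_mat c d" and "i < a" "j < d"
  shows "(A * B * C) $$ (i,j) = (\<Sum>t<c. (\<Sum>s<b. A $$ (i,s) * B $$ (s,t)) * C $$ (t,j))"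
proof -
  have AB: "A*B \<in> carrier_mat a c" using A B by auto
  show ?thesis using assms by (subst mult2_idx[OF AB C]) (simp_all add: mult2_idx[OF A B] del: index_mult_mat)
qed

lemma sum_blocks2: "(\<Sum>r<p + N*p. f r) = (\<Sum>a\<le>N. \<Sum>s<p. f (a*p+s :: nat))"
  using sum_blocks'[of f N p] by simp

lemma tr_idx: "A \<in> carrier_mat n m \<Longrightarrow> i < m \<Longrightarrow> j < n \<Longrightarrow> transpose_mat A $$ (i,j) = A $$ (j,i)"
  by auto

definition Rw :: "nat \<Rightarrow> nat \<Rightarrow> (nat \<Rightarrow> nat \<Rightarrow> complex mat) \<Rightarrow> nat \<Rightarrow> complex mat" where
  "Rw p N S k = mat p ((N+1)*p) (\<lambda>(i,r). (S k (r div p)) $$ (i, r mod p))"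

lemma Rw_carrier[simp]: "Rw p N S k \<in> carrier_mat p ((N+1)*p)" by (simp add: Rw_def)
lemma Rw_dim[simp]: "dim_row (Rw p N S k) = p" "dim_col (Rw p N S k) = (N+1)*p" by (simp_all add: Rw_def)
lemma Rw_idx: "i < p \<Longrightarrow> r < (N+1)*p \<Longrightarrow> Rw p N S k $$ (i,r) = (S k (r div p)) $$ (i, r mod p)"
  by (simp add: Rw_def)

lemma gram_dim[simp]: "dim_row (gram_trunc p G N) = (N+1)*p" "dim_col (gram_trunc p G N) = (N+1)*p" by (simp_all add: gram_trunc_def)
lemma gram_carrier[simp]: "gram_trunc p G N \<in> carrier_mat ((N+1)*p) ((N+1)*p)"
  by (simp add: gram_trunc_def)

lemma blu_zero: "block_lower_unitri p S \<Longrightarrow> k < a \<Longrightarrow> i < p \<Longrightarrow> j < p \<Longrightarrow> S k a $$ (i,j) = 0"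
  unfolding block_lower_unitri_def by auto

lemma blu_carrier: "block_lower_unitri p S \<Longrightarrow> S k a \<in> carrier_mat p p"
  unfolding block_lower_unitri_def by auto

lemma blu_diag: "block_lower_unitri p S \<Longrightarrow> i < p \<Longrightarrow> j < p \<Longrightarrow> S k k $$ (i,j) = (if i = j then 1 else 0)"
  unfolding block_lower_unitri_def by (auto simp: one_mat_def)

lemma gauss_blocks:
  assumes gf: "gauss_factorization p G S1 H S2" and G: "\<forall>a b. G a b \<in> carrier_mat p p"
    and p: "p > 0" and k: "k \<le> N" and l: "l \<le> N"
  shows "Rw p N S1 k * gram_trunc p G N * transpose_mat (Rw p N S2 l) = (if k = l then H k else 0\<^sub>m p p)"
proof -
  have b1: "block_lower_unitri p S1" and b2: "block_lower_unitri p S2" and Hc: "\<forall>n. H n \<in> carrier_mat p p"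
    and eq: "\<And>n m. mat p p (\<lambda>(i,j). \<Sum>a\<le>n. \<Sum>b\<le>m. (S1 n a * G a b * transpose_mat (S2 m b)) $$ (i,j))
              = (if n = m then H n else 0\<^sub>m p p)"
    using gf unfolding gauss_factorization_def by auto
  let ?D = "(N+1)*p"
  show ?thesis
  proof (rule eq_matI)
    show "dim_row (Rw p N S1 k * gram_trunc p G N * transpose_mat (Rw p N S2 l)) = dim_row (if k = l then H k else 0\<^sub>m p p)"
      using Hc by auto
    show "dim_col (Rw p N S1 k * gram_trunc p G N * transpose_mat (Rw p N S2 l)) = dim_col (if k = l then H k else 0\<^sub>m p p)"
      using Hc by auto
    fix i j assume ij: "i < dim_row (if k = l then H k else 0\<^sub>m p p)" "j < dim_col (if k = l then H k else 0\<^sub>m p p)"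
    then have i: "i < p" and j: "j < p" using Hc by (auto split: if_splits)
    have "(Rw p N S1 k * gram_trunc p G N * transpose_mat (Rw p N S2 l)) $$ (i,j)
       = (\<Sum>t<?D. (\<Sum>s<?D. Rw p N S1 k $$ (i,s) * gram_trunc p G N $$ (s,t)) * Rw p N S2 l $$ (j,t))"
      by (subst mult3_idx[of _ p ?D _ ?D _ p]) (use i j in auto)
    also have "\<dots> = (\<Sum>b\<le>N. \<Sum>t<p. (\<Sum>a\<le>N. \<Sum>s<p. (S1 k a) $$ (i,s) * (G a b) $$ (s,t)) * (S2 l b) $$ (j,t))"
      using i j p by (simp add: sum_blocks2 Rw_idx gram_trunc_def)
    also have "\<dots> = (\<Sum>b\<le>l. \<Sum>t<p. (\<Sum>a\<le>k. \<Sum>s<p. (S1 k a) $$ (i,s) * (G a b) $$ (s,t)) * (S2 l b) $$ (j,t))"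
    proof -
      have i1: "(\<Sum>a\<le>N. \<Sum>s<p. (S1 k a) $$ (i,s) * (G a b) $$ (s,t)) = (\<Sum>a\<le>k. \<Sum>s<p. (S1 k a) $$ (i,s) * (G a b) $$ (s,t))" for b t
        by (rule sum.mono_neutral_right) (use k i in \<open>auto intro!: sum.neutral simp: blu_zero[OF b1]\<close>)
      have "(\<Sum>b\<le>N. \<Sum>t<p. (\<Sum>a\<le>k. \<Sum>s<p. (S1 k a) $$ (i,s) * (G a b) $$ (s,t)) * (S2 l b) $$ (j,t))
         = (\<Sum>b\<le>l. \<Sum>t<p. (\<Sum>a\<le>k. \<Sum>s<p. (S1 k a) $$ (i,s) * (G a b) $$ (s,t)) * (S2 l b) $$ (j,t))"
        by (rule sum.mono_neutral_right) (use l j in \<open>auto intro!: sum.neutral simp: blu_zero[OF b2]\<close>)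
      thus ?thesis by (simp add: i1)
    qed
    also have "\<dots> = (\<Sum>a\<le>k. \<Sum>b\<le>l. (S1 k a * G a b * transpose_mat (S2 l b)) $$ (i,j))"
    proof -
      have "(S1 k a * G a b * transpose_mat (S2 l b)) $$ (i,j) = (\<Sum>t<p. (\<Sum>s<p. (S1 k a) $$ (i,s) * (G a b) $$ (s,t)) * (S2 l b) $$ (j,t))" for a b
        using tr_idx[OF blu_carrier[OF b2, of l b]] by (subst mult3_idx[of _ p p _ p _ p]) (use i j blu_carrier[OF b1] blu_carrier[OF b2] G in \<open>auto intro!: sum.cong\<close>)
      hence "(\<Sum>a\<le>k. \<Sum>b\<le>l. (S1 k a * G a b * transpose_mat (S2 l b)) $$ (i,j))
          = (\<Sum>a\<le>k. \<Sum>b\<le>l. \<Sum>t<p. (\<Sum>s<p. (S1 k a) $$ (i,s) * (G a b) $$ (s,t)) * (S2 l b) $$ (j,t))"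
        by simp
      also have "\<dots> = (\<Sum>b\<le>l. \<Sum>a\<le>k. \<Sum>t<p. (\<Sum>s<p. (S1 k a) $$ (i,s) * (G a b) $$ (s,t)) * (S2 l b) $$ (j,t))"
        by (rule sum.swap)
      also have "\<dots> = (\<Sum>b\<le>l. \<Sum>t<p. (\<Sum>a\<le>k. \<Sum>s<p. (S1 k a) $$ (i,s) * (G a b) $$ (s,t)) * (S2 l b) $$ (j,t))"
        by (simp only: sum_distrib_right, rule sum.cong[OF refl], rule sum.swap)
      finally show ?thesis by simp
    qed
    also have "\<dots> = (if k = l then H k else 0\<^sub>m p p) $$ (i,j)"
      using arg_cong[OF eq[of k l], of "\<lambda>M. M $$ (i,j)"] i j by simp
    finally show "(Rw p N S1 k * gram_trunc p G N * transpose_mat (Rw p N S2 l)) $$ (i,j) = (if k = l then H k else 0\<^sub>m p p) $$ (i,j)" .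
  qed
qed

lemma mdeg_ge: "i < dim_row P \<Longrightarrow> j < dim_col P \<Longrightarrow> degree (P $$ (i,j)) \<le> mdeg P"
proof -
  assume ij: "i < dim_row P" "j < dim_col P"
  have fin: "finite {degree (P $$ (i,j)) | i j. i < dim_row P \<and> j < dim_col P}"
  proof -
    have "{degree (P $$ (i,j)) | i j. i < dim_row P \<and> j < dim_col P}
        = (\<lambda>(i,j). degree (P $$ (i,j))) ` ({..<dim_row P} \<times> {..<dim_col P})" by auto
    thus ?thesis by simp
  qed
  show ?thesis unfolding mdeg_def
    by (rule Max_ge) (use fin ij in auto)
qed

lemma sum_coeff_ext:
  assumes "degree f \<le> d1" "degree f \<le> d2"
  shows "(\<Sum>r\<le>d1. coeff f r * g r) = (\<Sum>r\<le>d2. coeff f r * (g r :: complex))"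
proof -
  have "(\<Sum>r\<le>d1. coeff f r * g r) = (\<Sum>r\<le>max d1 d2. coeff f r * g r)"
    by (rule sum.mono_neutral_left) (use assms in \<open>auto simp: coeff_eq_0\<close>)
  also have "\<dots> = (\<Sum>r\<le>d2. coeff f r * g r)"
    by (rule sum.mono_neutral_right) (use assms in \<open>auto simp: coeff_eq_0\<close>)
  finally show ?thesis .
qed

lemma sum_coeff_ext':
  assumes "degree f \<le> d1" "degree f \<le> d2"
  shows "(\<Sum>r\<le>d1. g r * coeff f r) = (\<Sum>r\<le>d2. (g r :: complex) * coeff f r)"
  using sum_coeff_ext[OF assms, of g] by (simp add: mult.commute)

lemma sum_delta_mult: "finite A \<Longrightarrow> (\<Sum>r\<in>A. (if a = r then 1 else 0) * f r) = (if a \<in> A then f a else (0::complex))"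
  by (induction A rule: finite_induct) auto

lemma monomI_idx: "i < p \<Longrightarrow> j < p \<Longrightarrow> monomI p a $$ (i,j) = (if i = j then monom 1 a else 0)"
  by (simp add: monomI_def)

lemma pairR_monomI:
  assumes "i < p" "l < p"
  shows "pairR p (monomI p a) B $$ (i,l) = (B a) $$ (i,l)"
proof -
  have dm: "degree (monomI p a $$ (i,i)) \<le> mdeg (monomI p a)"
    by (rule mdeg_ge) (use assms in \<open>auto simp: monomI_def\<close>)
  have "pairR p (monomI p a) B $$ (i,l) = (\<Sum>k<p. \<Sum>r\<le>mdeg (monomI p a). coeff (monomI p a $$ (i,k)) r * (B r) $$ (k,l))"
    using assms by (simp add: pairR_def)
  also have "\<dots> = (\<Sum>r\<le>mdeg (monomI p a). coeff (monomI p a $$ (i,i)) r * (B r) $$ (i,l))"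
    by (subst sum.remove[of _ i]) (use assms in \<open>auto simp: monomI_idx intro!: sum.neutral\<close>)
  also have "\<dots> = (B a) $$ (i,l)"
    using dm assms by (simp add: monomI_idx coeff_monom sum_delta_mult degree_monom_eq)
  finally show ?thesis .
qed

definition Bm :: "nat \<Rightarrow> nat \<Rightarrow> (nat \<Rightarrow> nat) \<Rightarrow> (nat \<Rightarrow> nat \<Rightarrow> nat \<Rightarrow> complex mat) \<Rightarrow> nat \<Rightarrow> complex mat" where
  "Bm p q \<kappa> \<beta> N = mat ((N+1)*p) (NN q \<kappa> * p) (\<lambda>(r,c). case bidx q \<kappa> ! (c div p) of (j,m) \<Rightarrow>
       (\<beta> j m (r div p)) $$ (r mod p, c mod p))"

definition Lm :: "nat \<Rightarrow> nat \<Rightarrow> (nat \<Rightarrow> real) \<Rightarrow> (nat \<Rightarrow> nat) \<Rightarrow> nat \<Rightarrow> complex mat" where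
  "Lm p q xs \<kappa> N = mat ((N+1)*p) (NN q \<kappa> * p) (\<lambda>(r,c). case bidx q \<kappa> ! (c div p) of (j,m) \<Rightarrow>
       if r mod p = c mod p then poly ((pderiv ^^ m) (monom 1 (r div p))) (of_real (xs j)) / of_nat (fact m) else 0)"

lemma Bm_carrier[simp]: "Bm p q \<kappa> \<beta> N \<in> carrier_mat ((N+1)*p) (NN q \<kappa> * p)" by (simp add: Bm_def)
lemma Lm_carrier[simp]: "Lm p q xs \<kappa> N \<in> carrier_mat ((N+1)*p) (NN q \<kappa> * p)" by (simp add: Lm_def)
lemma Bm_dim[simp]: "dim_row (Bm p q \<kappa> \<beta> N) = (N+1)*p" "dim_col (Bm p q \<kappa> \<beta> N) = NN q \<kappa> * p" by (simp_all add: Bm_def)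
lemma Lm_dim[simp]: "dim_row (Lm p q xs \<kappa> N) = (N+1)*p" "dim_col (Lm p q xs \<kappa> N) = NN q \<kappa> * p" by (simp_all add: Lm_def)

lemma sum_list_nth: "(\<Sum>x\<leftarrow>xs. f x) = (\<Sum>t<length xs. f (xs ! t))"
  by (simp add: sum_list_sum_nth atLeast0LessThan)

lemma vform_monomI:
  assumes "k < p" "l < p"
  shows "vform p q xs \<kappa> \<beta> (monomI p a) (monomI p b) $$ (k,l)
    = (\<Sum>t<NN q \<kappa>. case bidx q \<kappa> ! t of (j,m) \<Rightarrow>
          (\<beta> j m a) $$ (k,l) * (poly ((pderiv ^^ m) (monom 1 b)) (of_real (xs j)) / of_nat (fact m)))"
proof -
  have *: "(pairR p (monomI p a) (\<beta> j m) * transpose_mat (meval (mderiv m (monomI p b)) (of_real (xs j)))) $$ (k,l)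
      = (\<beta> j m a) $$ (k,l) * poly ((pderiv ^^ m) (monom 1 b)) (of_real (xs j))" for j m
  proof -
    have "(pairR p (monomI p a) (\<beta> j m) * transpose_mat (meval (mderiv m (monomI p b)) (of_real (xs j)))) $$ (k,l)
      = (\<Sum>s<p. pairR p (monomI p a) (\<beta> j m) $$ (k,s) * (if s = l then poly ((pderiv ^^ m) (monom 1 b)) (of_real (xs j)) else 0))"
      by (subst mult2_idx[of _ p p _ p]) (use assms in \<open>auto simp: pairR_def meval_def mderiv_def monomI_def intro!: sum.cong\<close>)
    also have "\<dots> = pairR p (monomI p a) (\<beta> j m) $$ (k,l) * poly ((pderiv ^^ m) (monom 1 b)) (of_real (xs j))"
      using assms by (simp add: if_distrib cong: if_cong)
    finally show ?thesis using pairR_monomI assms by simp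
  qed
  show ?thesis
    unfolding vform_def using assms
    apply (simp add: sum_list_nth NN_def)
    apply (rule sum.cong[OF refl])
    apply (simp split: prod.split add: *)
    done
qed

lemma blk_div[simp]: "s < p \<Longrightarrow> (t * p + s) div p = (t::nat)" by simp
lemma blk_mod[simp]: "s < p \<Longrightarrow> (t * p + s) mod p = (s::nat)" by simp

lemma add_idx: "B \<in> carrier_mat n m \<Longrightarrow> i < n \<Longrightarrow> j < m \<Longrightarrow> (A + B) $$ (i,j) = A $$ (i,j) + B $$ (i,j)"
  by auto

lemma Ghat_eq:
  assumes p: "p > 0" and u_dim: "\<forall>a b. u a b \<in> carrier_mat p p"
  shows "gram_trunc p (uhat p q xs \<kappa> \<beta> u) N = gram_trunc p u N + Bm p q \<kappa> \<beta> N * transpose_mat (Lm p q xs \<kappa> N)"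
proof (rule eq_matI)
  fix r s assume "r < dim_row (gram_trunc p u N + Bm p q \<kappa> \<beta> N * transpose_mat (Lm p q xs \<kappa> N))"
    "s < dim_col (gram_trunc p u N + Bm p q \<kappa> \<beta> N * transpose_mat (Lm p q xs \<kappa> N))"
  hence r: "r < (N+1)*p" and s: "s < (N+1)*p" by auto
  have km: "r mod p < p" "s mod p < p" using p by auto
  have "(Bm p q \<kappa> \<beta> N * transpose_mat (Lm p q xs \<kappa> N)) $$ (r,s)
     = (\<Sum>c<NN q \<kappa> * p. Bm p q \<kappa> \<beta> N $$ (r,c) * Lm p q xs \<kappa> N $$ (s,c))"
    by (subst mult2_idx[of _ "(N+1)*p" "NN q \<kappa> * p" _ "(N+1)*p"]) (use r s in auto)
  also have "\<dots> = (\<Sum>t<NN q \<kappa>. \<Sum>l'<p. Bm p q \<kappa> \<beta> N $$ (r,t*p+l') * Lm p q xs \<kappa> N $$ (s,t*p+l'))"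
    by (rule sum_blocks)
  also have "\<dots> = (\<Sum>t<NN q \<kappa>. case bidx q \<kappa> ! t of (j,m) \<Rightarrow>
          (\<beta> j m (r div p)) $$ (r mod p, s mod p) * (poly ((pderiv ^^ m) (monom 1 (s div p))) (of_real (xs j)) / of_nat (fact m)))"
  proof (rule sum.cong[OF refl])
    fix t assume t: "t \<in> {..<NN q \<kappa>}"
    obtain j m where jm: "bidx q \<kappa> ! t = (j,m)" by fastforce
    have tl: "t * p + l' < NN q \<kappa> * p" if "l' < p" for l'
    proof -
      have "t * p + l' < t * p + p" using that by simp
      also have "\<dots> = (t+1)*p" by simp
      also have "\<dots> \<le> NN q \<kappa> * p" using t by (intro mult_right_mono) auto
      finally show ?thesis .
    qed
    have "(\<Sum>l'<p. Bm p q \<kappa> \<beta> N $$ (r,t*p+l') * Lm p q xs \<kappa> N $$ (s,t*p+l'))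
       = (\<Sum>l'<p. (\<beta> j m (r div p)) $$ (r mod p, l') * (if s mod p = l' then poly ((pderiv ^^ m) (monom 1 (s div p))) (of_real (xs j)) / of_nat (fact m) else 0))"
      by (rule sum.cong[OF refl]) (use r s tl jm in \<open>auto simp: Bm_def Lm_def\<close>)
    also have "\<dots> = (\<beta> j m (r div p)) $$ (r mod p, s mod p) * (poly ((pderiv ^^ m) (monom 1 (s div p))) (of_real (xs j)) / of_nat (fact m))"
      using km by (simp add: if_distrib cong: if_cong)
    finally show "(\<Sum>l'<p. Bm p q \<kappa> \<beta> N $$ (r,t*p+l') * Lm p q xs \<kappa> N $$ (s,t*p+l'))
       = (case bidx q \<kappa> ! t of (j,m) \<Rightarrow>
          (\<beta> j m (r div p)) $$ (r mod p, s mod p) * (poly ((pderiv ^^ m) (monom 1 (s div p))) (of_real (xs j)) / of_nat (fact m)))"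
      using jm by simp
  qed
  also have "\<dots> = vform p q xs \<kappa> \<beta> (monomI p (r div p)) (monomI p (s div p)) $$ (r mod p, s mod p)"
    by (rule vform_monomI[symmetric]) (use km in auto)
  finally have BL: "(Bm p q \<kappa> \<beta> N * transpose_mat (Lm p q xs \<kappa> N)) $$ (r,s) = vform p q xs \<kappa> \<beta> (monomI p (r div p)) (monomI p (s div p)) $$ (r mod p, s mod p)" .
  have vd: "vform p q xs \<kappa> \<beta> P Q \<in> carrier_mat p p" for P Q by (simp add: vform_def)
  show "gram_trunc p (uhat p q xs \<kappa> \<beta> u) N $$ (r,s) = (gram_trunc p u N + Bm p q \<kappa> \<beta> N * transpose_mat (Lm p q xs \<kappa> N)) $$ (r,s)"
    using r s km u_dim vd BL by (simp add: gram_trunc_def uhat_def add_idx[OF vd])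
qed auto

definition PM :: "nat \<Rightarrow> nat \<Rightarrow> complex mat \<Rightarrow> complex poly mat" where
  "PM p N C = mat (dim_row C) p (\<lambda>(i,l). \<Sum>a\<le>N. monom (C $$ (i, a*p+l)) a)"

lemma PM_dim[simp]: "dim_row (PM p N C) = dim_row C" "dim_col (PM p N C) = p" by (simp_all add: PM_def)

lemma PM_idx: "i < dim_row C \<Longrightarrow> l < p \<Longrightarrow> PM p N C $$ (i,l) = (\<Sum>a\<le>N. monom (C $$ (i, a*p+l)) a)"
  by (simp add: PM_def)

lemma coeff_PM: "i < dim_row C \<Longrightarrow> l < p \<Longrightarrow> coeff (PM p N C $$ (i,l)) e = (if e \<le> N then C $$ (i, e*p+l) else 0)"
  by (simp add: PM_idx coeff_sum coeff_monom)

lemma degree_PM: "i < dim_row C \<Longrightarrow> l < p \<Longrightarrow> degree (PM p N C $$ (i,l)) \<le> N"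
  by (rule degree_le) (simp add: coeff_PM)

lemma mdeg_PM: assumes "i < dim_row C" "l < p" shows "degree (PM p N C $$ (i,l)) \<le> mdeg (PM p N C)"
  by (rule mdeg_ge) (use assms in auto)

lemma bpoly_PM:
  assumes b: "block_lower_unitri p S" and n: "n \<le> N" and p: "p > 0"
  shows "bpoly p S n = PM p N (Rw p N S n)"
proof (rule eq_matI)
  fix i l assume "i < dim_row (PM p N (Rw p N S n))" "l < dim_col (PM p N (Rw p N S n))"
  hence i: "i < p" and l: "l < p" by auto
  have "PM p N (Rw p N S n) $$ (i,l) = (\<Sum>a\<le>N. monom ((S n a) $$ (i, l)) a)"
  proof -
    have "a * p + l < (N+1)*p" if "a \<le> N" for a
    proof -
      have "a * p + l < a * p + p" using l by simp
      also have "\<dots> = (a+1)*p" by simp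
      also have "\<dots> \<le> (N+1)*p" using that by (intro mult_right_mono) auto
      finally show ?thesis .
    qed
    thus ?thesis using i l by (simp add: PM_idx Rw_idx)
  qed
  also have "\<dots> = (\<Sum>a\<le>n. monom ((S n a) $$ (i, l)) a)"
    by (rule sum.mono_neutral_right) (use n i l blu_zero[OF b] in auto)
  also have "\<dots> = bpoly p S n $$ (i,l)" using i l by (simp add: bpoly_def)
  finally show "bpoly p S n $$ (i,l) = PM p N (Rw p N S n) $$ (i,l)" by simp
qed (auto simp: bpoly_def)

lemma blk_lt: "l < p \<Longrightarrow> a \<le> N \<Longrightarrow> a * p + l < (N+1)*(p::nat)"
proof -
  assume l: "l < p" and a: "a \<le> N"
  have "a * p + l < a * p + p" using l by simp
  also have "\<dots> = (a+1)*p" by simp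
  also have "\<dots> \<le> (N+1)*p" using a by (intro mult_right_mono) auto
  finally show ?thesis .
qed

lemma blk_lt2: "l < p \<Longrightarrow> a < M \<Longrightarrow> a * p + l < M*(p::nat)"
  using blk_lt[of l p a "M-1"] by (cases M) auto

lemma pair_row_PM:
  assumes C: "C \<in> carrier_mat p ((N+1)*p)" and p: "p > 0"
  shows "pair_row p q \<kappa> \<beta> (PM p N C) = C * Bm p q \<kappa> \<beta> N"
proof (rule eq_matI)
  fix i c assume "i < dim_row (C * Bm p q \<kappa> \<beta> N)" "c < dim_col (C * Bm p q \<kappa> \<beta> N)"
  hence i: "i < p" and c: "c < NN q \<kappa> * p" using C by auto
  obtain j m where jm: "bidx q \<kappa> ! (c div p) = (j,m)" by fastforce
  have cm: "c mod p < p" using p by simp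
  have "pair_row p q \<kappa> \<beta> (PM p N C) $$ (i,c) = pairR p (PM p N C) (\<beta> j m) $$ (i, c mod p)"
    using i c jm by (simp add: pair_row_def)
  also have "\<dots> = (\<Sum>k<p. \<Sum>r\<le>mdeg (PM p N C). coeff (PM p N C $$ (i,k)) r * (\<beta> j m r) $$ (k, c mod p))"
    using i cm by (simp add: pairR_def)
  also have "\<dots> = (\<Sum>k<p. \<Sum>r\<le>N. coeff (PM p N C $$ (i,k)) r * (\<beta> j m r) $$ (k, c mod p))"
    by (rule sum.cong[OF refl], rule sum_coeff_ext) (use i C in \<open>auto intro: mdeg_PM degree_PM\<close>)
  also have "\<dots> = (\<Sum>k<p. \<Sum>r\<le>N. C $$ (i, r*p+k) * (\<beta> j m r) $$ (k, c mod p))"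
    using i C by (simp add: coeff_PM)
  also have "\<dots> = (\<Sum>r\<le>N. \<Sum>k<p. C $$ (i, r*p+k) * Bm p q \<kappa> \<beta> N $$ (r*p+k, c))"
    by (subst sum.swap) (use i c jm blk_lt in \<open>auto simp: Bm_def intro!: sum.cong\<close>)
  also have "\<dots> = (C * Bm p q \<kappa> \<beta> N) $$ (i,c)"
    by (subst mult2_idx[OF C Bm_carrier]) (use i c in \<open>auto simp: sum_blocks' sum_blocks2\<close>)
  finally show "pair_row p q \<kappa> \<beta> (PM p N C) $$ (i,c) = (C * Bm p q \<kappa> \<beta> N) $$ (i,c)" .
qed (use C in \<open>auto simp: pair_row_def\<close>)

lemma higher_pderiv_monom': "(pderiv ^^ m) (monom c a) = smult c ((pderiv ^^ m) (monom 1 a))"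
proof -
  have "monom c a = smult c (monom 1 a)" by (simp add: smult_monom)
  thus ?thesis by (simp only: higher_pderiv_smult)
qed

lemma jet_PM:
  assumes C: "C \<in> carrier_mat p ((N+1)*p)" and p: "p > 0"
  shows "jet p q xs \<kappa> (PM p N C) = C * Lm p q xs \<kappa> N"
proof (rule eq_matI)
  fix i c assume "i < dim_row (C * Lm p q xs \<kappa> N)" "c < dim_col (C * Lm p q xs \<kappa> N)"
  hence i: "i < p" and c: "c < NN q \<kappa> * p" using C by auto
  obtain j m where jm: "bidx q \<kappa> ! (c div p) = (j,m)" by fastforce
  have cm: "c mod p < p" using p by simp
  have "jet p q xs \<kappa> (PM p N C) $$ (i,c) = poly ((pderiv ^^ m) (PM p N C $$ (i, c mod p))) (of_real (xs j)) / of_nat (fact m)"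
    using i c jm by (simp add: jet_def)
  also have "\<dots> = (\<Sum>a\<le>N. C $$ (i, a*p + c mod p) * (poly ((pderiv ^^ m) (monom 1 a)) (of_real (xs j)) / of_nat (fact m)))"
    using i cm C by (simp add: PM_idx higher_pderiv_sum poly_sum higher_pderiv_monom'[of m "C $$ _"] sum_divide_distrib)
  also have "\<dots> = (\<Sum>a\<le>N. \<Sum>k<p. C $$ (i, a*p+k) * Lm p q xs \<kappa> N $$ (a*p+k, c))"
  proof (rule sum.cong[OF refl])
    fix a assume a: "a \<in> {..N}"
    have "(\<Sum>k<p. C $$ (i, a*p+k) * Lm p q xs \<kappa> N $$ (a*p+k, c))
       = (\<Sum>k<p. C $$ (i, a*p+k) * (if k = c mod p then poly ((pderiv ^^ m) (monom 1 a)) (of_real (xs j)) / of_nat (fact m) else 0))"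
      by (rule sum.cong[OF refl]) (use a c jm blk_lt in \<open>auto simp: Lm_def\<close>)
    also have "\<dots> = C $$ (i, a*p + c mod p) * (poly ((pderiv ^^ m) (monom 1 a)) (of_real (xs j)) / of_nat (fact m))"
      using cm by (simp add: if_distrib cong: if_cong)
    finally show "C $$ (i, a*p + c mod p) * (poly ((pderiv ^^ m) (monom 1 a)) (of_real (xs j)) / of_nat (fact m))
       = (\<Sum>k<p. C $$ (i, a*p+k) * Lm p q xs \<kappa> N $$ (a*p+k, c))" by simp
  qed
  also have "\<dots> = (C * Lm p q xs \<kappa> N) $$ (i,c)"
    by (subst mult2_idx[OF C Lm_carrier]) (use i c in \<open>auto simp: sum_blocks' sum_blocks2\<close>)
  finally show "jet p q xs \<kappa> (PM p N C) $$ (i,c) = (C * Lm p q xs \<kappa> N) $$ (i,c)" .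
qed (use C in \<open>auto simp: jet_def\<close>)

definition Xy :: "nat \<Rightarrow> nat \<Rightarrow> complex \<Rightarrow> complex mat" where
  "Xy p N y = mat ((N+1)*p) p (\<lambda>(r,l). if r mod p = l then y ^ (r div p) else 0)"

lemma Xy_carrier[simp]: "Xy p N y \<in> carrier_mat ((N+1)*p) p" by (simp add: Xy_def)
lemma Xy_dim[simp]: "dim_row (Xy p N y) = (N+1)*p" "dim_col (Xy p N y) = p" by (simp_all add: Xy_def)

lemma meval_PM:
  assumes C: "C \<in> carrier_mat r ((N+1)*p)" and p: "p > 0"
  shows "meval (PM p N C) y = C * Xy p N y"
proof (rule eq_matI)
  fix i l assume "i < dim_row (C * Xy p N y)" "l < dim_col (C * Xy p N y)"
  hence i: "i < r" and l: "l < p" using C by auto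
  have "meval (PM p N C) y $$ (i,l) = (\<Sum>a\<le>N. C $$ (i, a*p+l) * y ^ a)"
    using i l C by (simp add: meval_def PM_idx poly_sum poly_monom)
  also have "\<dots> = (\<Sum>a\<le>N. \<Sum>k<p. C $$ (i, a*p+k) * Xy p N y $$ (a*p+k, l))"
  proof (rule sum.cong[OF refl])
    fix a assume a: "a \<in> {..N}"
    have "(\<Sum>k<p. C $$ (i, a*p+k) * Xy p N y $$ (a*p+k, l)) = (\<Sum>k<p. C $$ (i, a*p+k) * (if k = l then y ^ a else 0))"
      by (rule sum.cong[OF refl]) (use a l blk_lt in \<open>auto simp: Xy_def\<close>)
    also have "\<dots> = C $$ (i, a*p+l) * y ^ a" using l by (simp add: if_distrib cong: if_cong)
    finally show "C $$ (i, a*p+l) * y ^ a = (\<Sum>k<p. C $$ (i, a*p+k) * Xy p N y $$ (a*p+k, l))" by simp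
  qed
  also have "\<dots> = (C * Xy p N y) $$ (i,l)"
    by (subst mult2_idx[OF C Xy_carrier]) (use i l in \<open>auto simp: sum_blocks' sum_blocks2\<close>)
  finally show "meval (PM p N C) y $$ (i,l) = (C * Xy p N y) $$ (i,l)" .
qed (use C in \<open>auto simp: meval_def\<close>)

lemma poly_map_const: "poly (map_poly (\<lambda>c. [:c:]) A) [:z:] = [:poly A z:]"
  by (simp add: pcompose_altdef[symmetric] pcompose_pCons_0)

lemma pderiv_map_const: "pderiv (map_poly (\<lambda>c. [:c::complex:]) A) = map_poly (\<lambda>c. [:c:]) (pderiv A)"
  by (rule poly_eqI) (simp add: coeff_pderiv coeff_map_poly of_nat_poly)

lemma hpderiv_map_const: "(pderiv ^^ m) (map_poly (\<lambda>c. [:c::complex:]) A) = map_poly (\<lambda>c. [:c:]) ((pderiv ^^ m) A)"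
  by (induction m) (simp_all add: pderiv_map_const)

lemma hpderiv_mult_const: "(pderiv ^^ m) (F * [:g:]) = (pderiv ^^ m) F * [:g:]"
  by (induction m) (simp_all add: pderiv_mult pderiv_pCons pderiv_smult)

lemma kernel_term_eval:
  "poly ((pderiv ^^ m) (map_poly (\<lambda>c. [:c::complex:]) A * [:[:h:]:] * [:B:])) [:z:]
     = smult (poly ((pderiv ^^ m) A) z * h) B"
proof -
  have "map_poly (\<lambda>c. [:c::complex:]) A * [:[:h:]:] * [:B:] = map_poly (\<lambda>c. [:c:]) A * [:smult h B:]"
    by (simp add: mult.assoc)
  thus ?thesis by (simp add: higher_pderiv_smult hpderiv_map_const poly_map_const mult.commute)
qed

lemma CD_eval:
  assumes "s < p" "l < p"
  shows "poly ((pderiv ^^ m') (CDkernel p S1 H S2 m $$ (s,l))) [:z:]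
    = (\<Sum>k\<le>m. \<Sum>a<p. \<Sum>b<p. smult (poly ((pderiv ^^ m') (bpoly p S2 k $$ (a,s))) z * minv (H k) $$ (a,b)) (bpoly p S1 k $$ (b,l)))"
  using assms by (simp add: CDkernel_def higher_pderiv_sum poly_sum kernel_term_eval del: mult_pCons_right mult_pCons_left)

definition Tk :: "nat \<Rightarrow> nat \<Rightarrow> (nat \<Rightarrow> nat \<Rightarrow> complex mat) \<Rightarrow> (nat \<Rightarrow> complex mat) \<Rightarrow> (nat \<Rightarrow> nat \<Rightarrow> complex mat) \<Rightarrow> nat \<Rightarrow> complex mat" where
  "Tk p N S1 H S2 k = transpose_mat (Rw p N S2 k) * minv (H k) * Rw p N S1 k"

primrec Wm :: "nat \<Rightarrow> nat \<Rightarrow> (nat \<Rightarrow> nat \<Rightarrow> complex mat) \<Rightarrow> (nat \<Rightarrow> complex mat) \<Rightarrow> (nat \<Rightarrow> nat \<Rightarrow> complex mat) \<Rightarrow> nat \<Rightarrow> complex mat" where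
  "Wm p N S1 H S2 0 = Tk p N S1 H S2 0"
| "Wm p N S1 H S2 (Suc m) = Wm p N S1 H S2 m + Tk p N S1 H S2 (Suc m)"

lemma Tk_carrier: "minv (H k) \<in> carrier_mat p p \<Longrightarrow> Tk p N S1 H S2 k \<in> carrier_mat ((N+1)*p) ((N+1)*p)"
  unfolding Tk_def by (intro mult_carrier_mat[of _ _ p] transpose_carrier_mat Rw_carrier) auto

lemma Wm_carrier: "\<forall>k\<le>m. minv (H k) \<in> carrier_mat p p \<Longrightarrow> Wm p N S1 H S2 m \<in> carrier_mat ((N+1)*p) ((N+1)*p)"
proof (induction m)
  case 0 thus ?case using Tk_carrier[of H 0 p N S1 S2] by simp
next
  case (Suc m) thus ?case using Tk_carrier[of H "Suc m" p N S1 S2] by simp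
qed

lemma assoc4: "A \<in> carrier_mat a b \<Longrightarrow> B \<in> carrier_mat b c \<Longrightarrow> C \<in> carrier_mat c d \<Longrightarrow> E \<in> carrier_mat d e
  \<Longrightarrow> A * (B * C * E) = A * B * C * E"
proof -
  assume A: "A \<in> carrier_mat a b" and B: "B \<in> carrier_mat b c" and C: "C \<in> carrier_mat c d" and E: "E \<in> carrier_mat d e"
  have BC: "B * C \<in> carrier_mat b d" using B C by auto
  have "A * (B * C * E) = A * (B * C) * E" using assoc_mult_mat[OF A BC E] by simp
  also have "A * (B * C) = A * B * C" using assoc_mult_mat[OF A B C] by simp
  finally show ?thesis .
qed

lemma VW_sum:
  assumes Hc: "\<forall>k\<le>m. minv (H k) \<in> carrier_mat p p" and V: "V \<in> carrier_mat ((N+1)*p) n"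
    and c: "c < n" and e: "e < (N+1)*p"
  shows "(transpose_mat V * Wm p N S1 H S2 m) $$ (c,e)
      = (\<Sum>k\<le>m. (transpose_mat (Rw p N S2 k * V) * minv (H k) * Rw p N S1 k) $$ (c,e))"
  using Hc
proof (induction m)
  case 0
  have "transpose_mat V * Tk p N S1 H S2 0 = transpose_mat (Rw p N S2 0 * V) * minv (H 0) * Rw p N S1 0"
    unfolding Tk_def transpose_mult[OF Rw_carrier V]
    by (rule assoc4[of _ n "(N+1)*p" _ p _ p _ "(N+1)*p"]) (use 0 V in auto)
  thus ?case by simp
next
  case (Suc m)
  have Wc: "Wm p N S1 H S2 m \<in> carrier_mat ((N+1)*p) ((N+1)*p)" using Suc.prems by (intro Wm_carrier) auto
  have Tc: "Tk p N S1 H S2 (Suc m) \<in> carrier_mat ((N+1)*p) ((N+1)*p)" using Suc.prems by (intro Tk_carrier) auto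
  have e1: "transpose_mat V * Tk p N S1 H S2 (Suc m) = transpose_mat (Rw p N S2 (Suc m) * V) * minv (H (Suc m)) * Rw p N S1 (Suc m)"
    unfolding Tk_def transpose_mult[OF Rw_carrier V]
    by (rule assoc4[of _ n "(N+1)*p" _ p _ p _ "(N+1)*p"]) (use Suc.prems V in auto)
  have e2: "transpose_mat V * Wm p N S1 H S2 (Suc m) = transpose_mat V * Wm p N S1 H S2 m + transpose_mat V * Tk p N S1 H S2 (Suc m)"
    unfolding Wm.simps by (rule mult_add_distrib_mat[of _ n "(N+1)*p"]) (use Wc Tc V in auto)
  note eqs = e1 e2
  have cc: "transpose_mat V * Tk p N S1 H S2 (Suc m) \<in> carrier_mat n ((N+1)*p)" using Tc V by auto
  have IH: "(transpose_mat V * Wm p N S1 H S2 m) $$ (c,e) = (\<Sum>k\<le>m. (transpose_mat (Rw p N S2 k * V) * minv (H k) * Rw p N S1 k) $$ (c,e))"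
    by (rule Suc.IH) (use Suc.prems in auto)
  have "(transpose_mat V * Wm p N S1 H S2 (Suc m)) $$ (c,e) = (transpose_mat V * Wm p N S1 H S2 m) $$ (c,e) + (transpose_mat V * Tk p N S1 H S2 (Suc m)) $$ (c,e)"
    unfolding eqs(2) by (rule add_idx[OF cc c e])
  thus ?case unfolding IH eqs(1) by (simp only: sum.atMost_Suc)
qed

lemma KER_PM:
  assumes p: "p > 0" and Hc: "\<forall>k\<le>m. minv (H k) \<in> carrier_mat p p" and b1: "block_lower_unitri p S1"
    and mN: "m \<le> N" and V: "V \<in> carrier_mat ((N+1)*p) n'" and F: "F \<in> carrier_mat n' p"
    and Fent: "\<And>c l. c < n' \<Longrightarrow> l < p \<Longrightarrow> F $$ (c,l) = (\<Sum>k\<le>m. \<Sum>a<p. \<Sum>b<p.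
        smult ((Rw p N S2 k * V) $$ (a,c) * minv (H k) $$ (a,b)) (bpoly p S1 k $$ (b,l)))"
  shows "F = PM p N (transpose_mat V * Wm p N S1 H S2 m)"
proof (rule eq_matI)
  show "dim_row F = dim_row (PM p N (transpose_mat V * Wm p N S1 H S2 m))" using F V by simp
  show "dim_col F = dim_col (PM p N (transpose_mat V * Wm p N S1 H S2 m))" using F V by simp
  fix c l assume "c < dim_row (PM p N (transpose_mat V * Wm p N S1 H S2 m))" "l < dim_col (PM p N (transpose_mat V * Wm p N S1 H S2 m))"
  hence c: "c < n'" and l: "l < p" using V by auto
  show "F $$ (c,l) = PM p N (transpose_mat V * Wm p N S1 H S2 m) $$ (c,l)"
  proof (rule poly_eqI)
    fix e
    have cb: "coeff (bpoly p S1 k $$ (b,l)) e = (if e \<le> N then Rw p N S1 k $$ (b, e*p+l) else 0)" if "k \<le> m" "b < p" for k b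
      using that mN l by (simp add: bpoly_PM[OF b1 _ p, of k N] coeff_PM)
    have "coeff (F $$ (c,l)) e = (\<Sum>k\<le>m. \<Sum>a<p. \<Sum>b<p.
        (Rw p N S2 k * V) $$ (a,c) * minv (H k) $$ (a,b) * coeff (bpoly p S1 k $$ (b,l)) e)"
      using c l by (simp add: Fent coeff_sum)
    also have "\<dots> = (if e \<le> N then (\<Sum>k\<le>m. \<Sum>a<p. \<Sum>b<p.
        (Rw p N S2 k * V) $$ (a,c) * minv (H k) $$ (a,b) * Rw p N S1 k $$ (b, e*p+l)) else 0)"
      by (simp add: cb)
    also have "\<dots> = coeff (PM p N (transpose_mat V * Wm p N S1 H S2 m) $$ (c,l)) e"
    proof (cases "e \<le> N")
      case True
      have el: "e*p+l < (N+1)*p" using blk_lt[OF l True] .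
      have "coeff (PM p N (transpose_mat V * Wm p N S1 H S2 m) $$ (c,l)) e = (transpose_mat V * Wm p N S1 H S2 m) $$ (c, e*p+l)"
        using True c l V by (simp add: coeff_PM)
      also have "\<dots> = (\<Sum>k\<le>m. (transpose_mat (Rw p N S2 k * V) * minv (H k) * Rw p N S1 k) $$ (c, e*p+l))"
        by (rule VW_sum[OF Hc V c el])
      also have "\<dots> = (\<Sum>k\<le>m. \<Sum>b<p. (\<Sum>a<p. transpose_mat (Rw p N S2 k * V) $$ (c,a) * minv (H k) $$ (a,b)) * Rw p N S1 k $$ (b, e*p+l))"
      proof (rule sum.cong[OF refl])
        fix k assume k: "k \<in> {..m}"
        have RV: "transpose_mat (Rw p N S2 k * V) \<in> carrier_mat n' p" using V by auto
        show "(transpose_mat (Rw p N S2 k * V) * minv (H k) * Rw p N S1 k) $$ (c, e*p+l)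
           = (\<Sum>b<p. (\<Sum>a<p. transpose_mat (Rw p N S2 k * V) $$ (c,a) * minv (H k) $$ (a,b)) * Rw p N S1 k $$ (b, e*p+l))"
          by (rule mult3_idx[OF RV _ Rw_carrier c el]) (use Hc k in auto)
      qed
      also have "\<dots> = (\<Sum>k\<le>m. \<Sum>a<p. \<Sum>b<p. (Rw p N S2 k * V) $$ (a,c) * minv (H k) $$ (a,b) * Rw p N S1 k $$ (b, e*p+l))"
      proof (rule sum.cong[OF refl])
        fix k assume k: "k \<in> {..m}"
        have tr: "transpose_mat (Rw p N S2 k * V) $$ (c,a) = (Rw p N S2 k * V) $$ (a,c)" if "a < p" for a
          using that c V by simp
        have "(\<Sum>b<p. (\<Sum>a<p. transpose_mat (Rw p N S2 k * V) $$ (c,a) * minv (H k) $$ (a,b)) * Rw p N S1 k $$ (b, e*p+l))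
           = (\<Sum>b<p. \<Sum>a<p. (Rw p N S2 k * V) $$ (a,c) * minv (H k) $$ (a,b) * Rw p N S1 k $$ (b, e*p+l))"
          by (simp only: sum_distrib_right, intro sum.cong refl, simp add: tr)
        also have "\<dots> = (\<Sum>a<p. \<Sum>b<p. (Rw p N S2 k * V) $$ (a,c) * minv (H k) $$ (a,b) * Rw p N S1 k $$ (b, e*p+l))"
          by (rule sum.swap)
        finally show "(\<Sum>b<p. (\<Sum>a<p. transpose_mat (Rw p N S2 k * V) $$ (c,a) * minv (H k) $$ (a,b)) * Rw p N S1 k $$ (b, e*p+l))
           = (\<Sum>a<p. \<Sum>b<p. (Rw p N S2 k * V) $$ (a,c) * minv (H k) $$ (a,b) * Rw p N S1 k $$ (b, e*p+l))" .
      qed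
      finally show ?thesis using True by simp
    next
      case False
      thus ?thesis using c l V by (simp add: coeff_PM)
    qed
    finally show "coeff (F $$ (c,l)) e = coeff (PM p N (transpose_mat V * Wm p N S1 H S2 m) $$ (c,l)) e" .
  qed
qed

lemma smult_sum2: "smult c (\<Sum>x\<in>A. f x) = (\<Sum>x\<in>A. smult c (f x))"
  by (induction A rule: infinite_finite_induct) (auto simp: smult_add_right)

lemma PM_carrier: "C \<in> carrier_mat r n \<Longrightarrow> PM p N C \<in> carrier_mat r p" by (simp add: PM_def)

lemma blk_lt'[simp]: "l < p \<Longrightarrow> a \<le> N \<Longrightarrow> a * p + l < p + N*(p::nat)"
  using blk_lt[of l p a N] by simp

lemma jet01_PM:
  assumes p: "p > 0" and Hc: "\<forall>k\<le>m. minv (H k) \<in> carrier_mat p p" and b1: "block_lower_unitri p S1"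
    and b2: "block_lower_unitri p S2" and mN: "m \<le> N"
  shows "jet01 p q xs \<kappa> (CDkernel p S1 H S2 m) = PM p N (transpose_mat (Lm p q xs \<kappa> N) * Wm p N S1 H S2 m)"
proof (rule KER_PM[OF p Hc b1 mN Lm_carrier])
  show "jet01 p q xs \<kappa> (CDkernel p S1 H S2 m) \<in> carrier_mat (NN q \<kappa> * p) p" by (simp add: jet01_def)
  fix c l assume c: "c < NN q \<kappa> * p" and l: "l < p"
  obtain j m' where jm: "bidx q \<kappa> ! (c div p) = (j,m')" by fastforce
  have cm: "c mod p < p" using p by simp
  have RL: "(Rw p N S2 k * Lm p q xs \<kappa> N) $$ (a,c) = poly ((pderiv ^^ m') (bpoly p S2 k $$ (a, c mod p))) (of_real (xs j)) / of_nat (fact m')"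
    if "k \<le> m" "a < p" for k a
  proof -
    have "Rw p N S2 k * Lm p q xs \<kappa> N = jet p q xs \<kappa> (bpoly p S2 k)"
      using bpoly_PM[OF b2 _ p, of k N] that mN jet_PM[OF Rw_carrier p] by simp
    thus ?thesis using that c jm by (simp add: jet_def)
  qed
  have "jet01 p q xs \<kappa> (CDkernel p S1 H S2 m) $$ (c,l) =
      smult (1 / of_nat (fact m')) (poly ((pderiv ^^ m') (CDkernel p S1 H S2 m $$ (c mod p, l))) [:of_real (xs j):])"
    using c l jm by (simp add: jet01_def)
  also have "\<dots> = (\<Sum>k\<le>m. \<Sum>a<p. \<Sum>b<p. smult ((Rw p N S2 k * Lm p q xs \<kappa> N) $$ (a,c) * minv (H k) $$ (a,b)) (bpoly p S1 k $$ (b,l)))"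
    using cm l by (simp add: CD_eval smult_sum2 RL del: index_mult_mat)
  finally show "jet01 p q xs \<kappa> (CDkernel p S1 H S2 m) $$ (c,l) = (\<Sum>k\<le>m. \<Sum>a<p. \<Sum>b<p. smult ((Rw p N S2 k * Lm p q xs \<kappa> N) $$ (a,c) * minv (H k) $$ (a,b)) (bpoly p S1 k $$ (b,l)))" .
qed

lemma kernel_at_y_PM:
  assumes p: "p > 0" and Hc: "\<forall>k\<le>m. minv (H k) \<in> carrier_mat p p" and b1: "block_lower_unitri p S1"
    and b2: "block_lower_unitri p S2" and mN: "m \<le> N"
  shows "kernel_at_y (CDkernel p S1 H S2 m) y = PM p N (transpose_mat (Xy p N y) * Wm p N S1 H S2 m)"
proof (rule KER_PM[OF p Hc b1 mN Xy_carrier])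
  show "kernel_at_y (CDkernel p S1 H S2 m) y \<in> carrier_mat p p" by (simp add: kernel_at_y_def CDkernel_def)
  fix s l assume s: "s < p" and l: "l < p"
  have RX: "(Rw p N S2 k * Xy p N y) $$ (a,s) = poly (bpoly p S2 k $$ (a, s)) y"
    if "k \<le> m" "a < p" for k a
  proof -
    have "Rw p N S2 k * Xy p N y = meval (bpoly p S2 k) y"
      using bpoly_PM[OF b2 _ p, of k N] that mN meval_PM[OF Rw_carrier p] by simp
    thus ?thesis using that s by (simp add: meval_def bpoly_def)
  qed
  have "kernel_at_y (CDkernel p S1 H S2 m) y $$ (s,l) = poly ((pderiv ^^ 0) (CDkernel p S1 H S2 m $$ (s, l))) [:y:]"
    using s l by (simp add: kernel_at_y_def CDkernel_def)
  also have "\<dots> = (\<Sum>k\<le>m. \<Sum>a<p. \<Sum>b<p. smult ((Rw p N S2 k * Xy p N y) $$ (a,s) * minv (H k) $$ (a,b)) (bpoly p S1 k $$ (b,l)))"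
    using s l by (simp only: CD_eval) (simp add: RX del: index_mult_mat)
  finally show "kernel_at_y (CDkernel p S1 H S2 m) y $$ (s,l) = (\<Sum>k\<le>m. \<Sum>a<p. \<Sum>b<p. smult ((Rw p N S2 k * Xy p N y) $$ (a,s) * minv (H k) $$ (a,b)) (bpoly p S1 k $$ (b,l)))" .
qed

lemma pair_col_PM:
  assumes L: "\<Lambda> \<in> carrier_mat (NN q \<kappa> * p) ((N+1)*p)" and p: "p > 0"
  shows "pair_col p q \<kappa> \<beta> (PM p N \<Lambda>) = \<Lambda> * Bm p q \<kappa> \<beta> N"
proof (rule eq_matI)
  fix c d assume "c < dim_row (\<Lambda> * Bm p q \<kappa> \<beta> N)" "d < dim_col (\<Lambda> * Bm p q \<kappa> \<beta> N)"
  hence c: "c < NN q \<kappa> * p" and d: "d < NN q \<kappa> * p" using L by auto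
  define Lb where "Lb = mat p ((N+1)*p) (\<lambda>(i,e). \<Lambda> $$ ((c div p)*p+i, e))"
  have Lb: "Lb \<in> carrier_mat p ((N+1)*p)" by (simp add: Lb_def)
  have rowlt: "(c div p)*p + i < NN q \<kappa> * p" if "i < p" for i
    using blk_lt2[OF that, of "c div p" "NN q \<kappa>"] c p by (simp add: less_mult_imp_div_less)
  have blk: "block_of_col p (PM p N \<Lambda>) (c div p) = PM p N Lb"
    by (rule eq_matI) (use L rowlt in \<open>auto simp: block_of_col_def PM_idx Lb_def intro!: sum.cong\<close>)
  have "pair_col p q \<kappa> \<beta> (PM p N \<Lambda>) $$ (c,d) = (Lb * Bm p q \<kappa> \<beta> N) $$ (c mod p, d)"
    using c d by (simp add: pair_col_def blk pair_row_PM[OF Lb p])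
  also have "\<dots> = (\<Lambda> * Bm p q \<kappa> \<beta> N) $$ (c, d)"
  proof -
    have cc: "(c div p)*p + c mod p = c" by simp
    have "(Lb * Bm p q \<kappa> \<beta> N) $$ (c mod p, d) = (\<Sum>s<(N+1)*p. Lb $$ (c mod p, s) * Bm p q \<kappa> \<beta> N $$ (s,d))"
      by (rule mult2_idx[OF Lb Bm_carrier]) (use p d in auto)
    also have "\<dots> = (\<Sum>s<(N+1)*p. \<Lambda> $$ (c, s) * Bm p q \<kappa> \<beta> N $$ (s,d))"
      using p by (intro sum.cong refl) (simp add: Lb_def cc)
    also have "\<dots> = (\<Lambda> * Bm p q \<kappa> \<beta> N) $$ (c, d)"
      by (rule mult2_idx[OF L Bm_carrier, symmetric]) (use c d in auto)
    finally show ?thesis .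
  qed
  finally show "pair_col p q \<kappa> \<beta> (PM p N \<Lambda>) $$ (c,d) = (\<Lambda> * Bm p q \<kappa> \<beta> N) $$ (c, d)" .
qed (use L in \<open>auto simp: pair_col_def\<close>)

lemma const_PM:
  assumes c: "c \<in> carrier_mat p n" and C: "C \<in> carrier_mat n ((N+1)*p)"
  shows "const_pmat c * PM p N C = PM p N (c * C)"
proof (rule eq_matI)
  fix i l assume "i < dim_row (PM p N (c * C))" "l < dim_col (PM p N (c * C))"
  hence i: "i < p" and l: "l < p" using c by auto
  have cp: "const_pmat c \<in> carrier_mat p n" using c by (simp add: const_pmat_def)
  have PC: "PM p N C \<in> carrier_mat n p" using C by (rule PM_carrier)
  have "(const_pmat c * PM p N C) $$ (i,l) = (\<Sum>t<n. const_pmat c $$ (i,t) * PM p N C $$ (t,l))"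
    by (rule mult2_idx[OF cp PC i l])
  also have "\<dots> = (\<Sum>t<n. \<Sum>a\<le>N. monom (c $$ (i,t) * C $$ (t, a*p+l)) a)"
    using i l c C by (intro sum.cong refl) (simp add: const_pmat_def PM_idx sum_distrib_left smult_monom)
  also have "\<dots> = (\<Sum>a\<le>N. monom (\<Sum>t<n. c $$ (i,t) * C $$ (t, a*p+l)) a)"
    by (subst sum.swap) (simp add: monom_sum)
  also have "\<dots> = PM p N (c * C) $$ (i,l)"
    using i l c C by (auto simp: PM_idx scalar_prod_def atLeast0LessThan intro!: sum.cong)
  finally show "(const_pmat c * PM p N C) $$ (i,l) = PM p N (c * C) $$ (i,l)" .
qed (use c in \<open>auto simp: const_pmat_def\<close>)

lemma PM_minus:
  assumes A: "A \<in> carrier_mat r ((N+1)*p)" and B: "B \<in> carrier_mat r ((N+1)*p)"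
  shows "PM p N A - PM p N B = PM p N (A - B)"
proof (rule eq_matI)
  fix i l assume "i < dim_row (PM p N (A - B))" "l < dim_col (PM p N (A - B))"
  hence i: "i < r" and l: "l < p" using A B by auto
  show "(PM p N A - PM p N B) $$ (i,l) = PM p N (A - B) $$ (i,l)"
    using i l A B blk_lt[OF l] by (simp add: PM_idx sum_subtractf[symmetric] diff_monom)
qed (use A B in auto)

definition St :: "nat \<Rightarrow> nat \<Rightarrow> (nat \<Rightarrow> nat \<Rightarrow> complex mat) \<Rightarrow> complex mat" where
  "St p N S = mat ((N+1)*p) ((N+1)*p) (\<lambda>(r,e). (S (r div p) (e div p)) $$ (r mod p, e mod p))"

lemma St_carrier[simp]: "St p N S \<in> carrier_mat ((N+1)*p) ((N+1)*p)" by (simp add: St_def)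
lemma St_dim[simp]: "dim_row (St p N S) = (N+1)*p" "dim_col (St p N S) = (N+1)*p" by (simp_all add: St_def)

lemma det_St:
  assumes b: "block_lower_unitri p S" and p: "p > 0"
  shows "det (St p N S) = 1"
proof -
  have low: "St p N S $$ (i,j) = 0" if "i < j" "j < (N+1)*p" for i j
  proof (cases "i div p < j div p")
    case True thus ?thesis using that p by (simp add: St_def blu_zero[OF b])
  next
    case False
    hence "i div p = j div p" using that div_le_mono[of i j p] by linarith
    moreover have "i mod p \<noteq> j mod p" using that \<open>i div p = j div p\<close>
      by (metis div_mult_mod_eq nat_neq_iff)
    ultimately show ?thesis using that p by (simp add: St_def blu_diag[OF b])
  qed
  have "det (St p N S) = prod_list (diag_mat (St p N S))"
    by (rule det_lower_triangular[OF _ St_carrier]) (use low in auto)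
  also have "\<dots> = 1"
  proof -
    have "\<forall>x \<in> set (diag_mat (St p N S)). x = 1"
      using p by (auto simp: diag_mat_def St_def blu_diag[OF b])
    moreover have "\<forall>x\<in>set xs. x = 1 \<Longrightarrow> prod_list xs = (1::complex)" for xs by (induction xs) auto
    ultimately show ?thesis by blast
  qed
  finally show ?thesis .
qed


lemma div_le_N: "r < (N+1)*p \<Longrightarrow> r div p \<le> (N::nat)"
  by (metis add.commute less_Suc_eq_le less_mult_imp_div_less plus_1_eq_Suc)

lemma St_prod:
  assumes gf: "gauss_factorization p G S1 H S2" and G: "\<forall>a b. G a b \<in> carrier_mat p p" and p: "p > 0"
  shows "St p N S1 * gram_trunc p G N * transpose_mat (St p N S2) =
     mat ((N+1)*p) ((N+1)*p) (\<lambda>(r,e). if r div p = e div p then H (r div p) $$ (r mod p, e mod p) else 0)"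
proof (rule eq_matI)
  fix r e assume "r < dim_row (mat ((N+1)*p) ((N+1)*p) (\<lambda>(r,e). if r div p = e div p then H (r div p) $$ (r mod p, e mod p) else (0::complex)))"
     "e < dim_col (mat ((N+1)*p) ((N+1)*p) (\<lambda>(r,e). if r div p = e div p then H (r div p) $$ (r mod p, e mod p) else (0::complex)))"
  hence r: "r < (N+1)*p" and e: "e < (N+1)*p" by auto
  have rm: "r mod p < p" "e mod p < p" using p by auto
  have "(St p N S1 * gram_trunc p G N * transpose_mat (St p N S2)) $$ (r,e)
     = (\<Sum>t<(N+1)*p. (\<Sum>s<(N+1)*p. St p N S1 $$ (r,s) * gram_trunc p G N $$ (s,t)) * St p N S2 $$ (e,t))"
    by (subst mult3_idx[of _ "(N+1)*p" "(N+1)*p" _ "(N+1)*p" _ "(N+1)*p"]) (use r e in \<open>auto intro!: sum.cong\<close>)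
  also have "\<dots> = (\<Sum>t<(N+1)*p. (\<Sum>s<(N+1)*p. Rw p N S1 (r div p) $$ (r mod p,s) * gram_trunc p G N $$ (s,t)) * Rw p N S2 (e div p) $$ (e mod p,t))"
    using r e rm by (intro sum.cong refl) (simp add: St_def Rw_idx)
  also have "\<dots> = (Rw p N S1 (r div p) * gram_trunc p G N * transpose_mat (Rw p N S2 (e div p))) $$ (r mod p, e mod p)"
    by (subst mult3_idx[of _ p "(N+1)*p" _ "(N+1)*p" _ p]) (use rm in \<open>auto intro!: sum.cong\<close>)
  also have "\<dots> = (if r div p = e div p then H (r div p) else 0\<^sub>m p p) $$ (r mod p, e mod p)"
    using gauss_blocks[OF gf G p div_le_N[OF r] div_le_N[OF e]] by simp
  also have "\<dots> = mat ((N+1)*p) ((N+1)*p) (\<lambda>(r,e). if r div p = e div p then H (r div p) $$ (r mod p, e mod p) else 0) $$ (r,e)"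
    using r e rm by simp
  finally show "(St p N S1 * gram_trunc p G N * transpose_mat (St p N S2)) $$ (r,e) = mat ((N+1)*p) ((N+1)*p) (\<lambda>(r,e). if r div p = e div p then H (r div p) $$ (r mod p, e mod p) else 0) $$ (r,e)" .
qed auto

lemma H_det:
  assumes gf: "gauss_factorization p G S1 H S2" and G: "\<forall>a b. G a b \<in> carrier_mat p p" and p: "p > 0"
    and qd: "quasidefinite p G"
  shows "det (H k) \<noteq> 0"
proof
  assume dk: "det (H k) = 0"
  have Hc: "H k \<in> carrier_mat p p" using gf unfolding gauss_factorization_def by auto
  obtain v where v: "v \<in> carrier_vec p" "v \<noteq> 0\<^sub>v p" "H k *\<^sub>v v = 0\<^sub>v p"
    using dk det_0_iff_vec_prod_zero[OF Hc] by auto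
  let ?D = "(k+1)*p"
  define Hb where "Hb = mat ?D ?D (\<lambda>(r,e). if r div p = e div p then H (r div p) $$ (r mod p, e mod p) else (0::complex))"
  have Hbc: "Hb \<in> carrier_mat ?D ?D" by (simp add: Hb_def)
  have c1: "St p k S1 * gram_trunc p G k \<in> carrier_mat ?D ?D" by auto
  have "det Hb = det (St p k S1 * gram_trunc p G k) * det (transpose_mat (St p k S2))"
    unfolding Hb_def St_prod[OF gf G p, symmetric]
    by (rule det_mult[OF c1]) (use St_carrier[of p k S2] in simp)
  also have "det (St p k S1 * gram_trunc p G k) = det (St p k S1) * det (gram_trunc p G k)"
    by (rule det_mult) auto
  also have "det (transpose_mat (St p k S2)) = det (St p k S2)" by (rule det_transpose[OF St_carrier])
  finally have "det Hb = det (St p k S1) * det (gram_trunc p G k) * det (St p k S2)" .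
  moreover have "det (St p k S1) = 1" "det (St p k S2) = 1"
    using gf p unfolding gauss_factorization_def by (auto intro: det_St)
  ultimately have dH: "det Hb \<noteq> 0" using qd unfolding quasidefinite_def by auto
  define V where "V = vec ?D (\<lambda>r. if r div p = k then v $ (r mod p) else 0)"
  have Vc: "V \<in> carrier_vec ?D" by (simp add: V_def)
  obtain s where s: "s < p" "v $ s \<noteq> 0" using v(1,2) by (metis carrier_vecD eq_vecI index_zero_vec(1,2))
  have ks: "k*p + s < ?D" using blk_lt[OF s(1), of k k] by simp
  have "V \<noteq> 0\<^sub>v ?D"
  proof
    assume "V = 0\<^sub>v ?D"
    hence "V $ (k*p+s) = 0" using ks by simp
    thus False using s ks by (simp add: V_def)
  qed
  moreover have "Hb *\<^sub>v V = 0\<^sub>v ?D"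
  proof (rule eq_vecI)
    fix r assume "r < dim_vec (0\<^sub>v ?D)"
    hence r: "r < ?D" by simp
    have rm: "r mod p < p" using p by simp
    have "(Hb *\<^sub>v V) $ r = (\<Sum>e<?D. Hb $$ (r,e) * V $ e)"
      using r Hbc Vc by (simp add: scalar_prod_def atLeast0LessThan)
    also have "\<dots> = (\<Sum>b\<le>k. \<Sum>t<p. Hb $$ (r,b*p+t) * V $ (b*p+t))" by (rule sum_blocks')
    also have "\<dots> = (\<Sum>t<p. Hb $$ (r,k*p+t) * V $ (k*p+t))"
      by (subst sum.remove[of _ k]) (use blk_lt in \<open>auto simp: V_def intro!: sum.neutral\<close>)
    also have "\<dots> = (if r div p = k then (\<Sum>t<p. H k $$ (r mod p, t) * v $ t) else 0)"
      using r blk_lt[of _ p k k] by (auto simp: Hb_def V_def intro!: sum.cong)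
    also have "\<dots> = 0"
    proof -
      have "(H k *\<^sub>v v) $ (r mod p) = (\<Sum>t<p. H k $$ (r mod p, t) * v $ t)"
        using Hc v(1) rm by (simp add: scalar_prod_def atLeast0LessThan)
      thus ?thesis using v(3) rm by simp
    qed
    finally show "(Hb *\<^sub>v V) $ r = 0\<^sub>v ?D $ r" using r by simp
  qed (simp add: Hb_def)
  ultimately have "det Hb = 0" using det_0_iff_vec_prod_zero[OF Hbc] Vc by auto
  thus False using dH by simp
qed

lemma conv_tri:
  assumes Y: "Y \<in> carrier_mat r ((N+1)*p)" and b: "block_lower_unitri p S" and p: "p > 0"
    and LN: "L \<le> N+1" and orth: "\<And>l. l < L \<Longrightarrow> Y * transpose_mat (Rw p N S l) = 0\<^sub>m r p"
  shows "l < L \<Longrightarrow> i < r \<Longrightarrow> t < p \<Longrightarrow> Y $$ (i, l*p+t) = 0"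
proof (induction l arbitrary: i t rule: less_induct)
  case (less l)
  have lN: "l \<le> N" using less.prems LN by simp
  have "0 = (Y * transpose_mat (Rw p N S l)) $$ (i,t)" using orth[OF less.prems(1)] less.prems by simp
  also have "\<dots> = (\<Sum>e<(N+1)*p. Y $$ (i,e) * Rw p N S l $$ (t,e))"
    by (subst mult2_idx[of _ r "(N+1)*p" _ p]) (use Y less.prems in \<open>auto intro!: sum.cong\<close>)
  also have "\<dots> = (\<Sum>a\<le>N. \<Sum>s<p. Y $$ (i,a*p+s) * (S l a) $$ (t,s))"
    using less.prems p by (simp add: sum_blocks2 Rw_idx)
  also have "\<dots> = (\<Sum>s<p. Y $$ (i,l*p+s) * (S l l) $$ (t,s))"
  proof -
    have nz: "(\<Sum>s<p. Y $$ (i,a*p+s) * (S l a) $$ (t,s)) = 0" if a: "a \<in> {..N} - {l}" for a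
    proof (cases "a < l")
      case True thus ?thesis using less.IH[OF True] less.prems LN by (auto intro!: sum.neutral)
    next
      case False hence "l < a" using a by auto
      thus ?thesis using blu_zero[OF b] less.prems by (auto intro!: sum.neutral)
    qed
    have "(\<Sum>a\<le>N. \<Sum>s<p. Y $$ (i,a*p+s) * (S l a) $$ (t,s)) = (\<Sum>s<p. Y $$ (i,l*p+s) * (S l l) $$ (t,s))
        + (\<Sum>a\<in>{..N} - {l}. \<Sum>s<p. Y $$ (i,a*p+s) * (S l a) $$ (t,s))"
      by (rule sum.remove) (use lN in auto)
    also have "(\<Sum>a\<in>{..N} - {l}. \<Sum>s<p. Y $$ (i,a*p+s) * (S l a) $$ (t,s)) = 0"
      by (rule sum.neutral) (use nz in blast)
    finally show ?thesis by simp
  qed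
  also have "\<dots> = Y $$ (i, l*p+t)"
    using less.prems by (simp add: blu_diag[OF b] if_distrib cong: if_cong)
  finally show ?case by simp
qed

lemma uniq_row:
  assumes p: "p > 0" and n: "n \<ge> 1" and b: "block_lower_unitri p S"
    and qdet: "det (gram_trunc p G (n-1)) \<noteq> 0"
    and D: "\<Delta> \<in> carrier_mat r ((n+1)*p)"
    and last: "\<And>i l. i < r \<Longrightarrow> l < p \<Longrightarrow> \<Delta> $$ (i, n*p+l) = 0"
    and orth: "\<And>l. l < n \<Longrightarrow> \<Delta> * gram_trunc p G n * transpose_mat (Rw p n S l) = 0\<^sub>m r p"
  shows "\<Delta> = 0\<^sub>m r ((n+1)*p)"
proof -
  let ?Y = "\<Delta> * gram_trunc p G n"
  have Yc: "?Y \<in> carrier_mat r ((n+1)*p)" using D by auto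
  have Y0: "?Y $$ (i, l*p+t) = 0" if "l < n" "i < r" "t < p" for i l t
    by (rule conv_tri[OF Yc b p _ orth, of n]) (use that in auto)
  define D' where "D' = mat r (n*p) (\<lambda>(i,e). \<Delta> $$ (i,e))"
  have nn: "(n - 1 + 1) * p = n * p" using n by simp
  have nn2: "p + (n - Suc 0) * p = n * p" using n by (cases n) auto
  have G': "gram_trunc p G (n-1) \<in> carrier_mat (n*p) (n*p)" using gram_carrier[of p G "n-1"] nn by simp
  have D'c: "D' \<in> carrier_mat r (n*p)" by (simp add: D'_def)
  have DG: "D' * gram_trunc p G (n-1) = 0\<^sub>m r (n*p)"
  proof (rule eq_matI)
    fix i e assume "i < dim_row (0\<^sub>m r (n*p))" "e < dim_col (0\<^sub>m r (n*p))"
    hence i: "i < r" and e: "e < n*p" by auto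
    have ed: "e div p < n" using e by (simp add: less_mult_imp_div_less)
    have e1: "e < (n+1)*p" using e by simp
    have "(D' * gram_trunc p G (n-1)) $$ (i,e) = (\<Sum>s<n*p. \<Delta> $$ (i,s) * gram_trunc p G n $$ (s,e))"
      by (subst mult2_idx[OF D'c G' i e]) (use i e in \<open>auto simp: D'_def gram_trunc_def nn nn2 intro!: sum.cong\<close>)
    also have "\<dots> = (\<Sum>s<(n+1)*p. \<Delta> $$ (i,s) * gram_trunc p G n $$ (s,e))"
    proof -
      have "(\<Sum>s<(n+1)*p. \<Delta> $$ (i,s) * gram_trunc p G n $$ (s,e))
          = (\<Sum>a<n+1. \<Sum>t<p. \<Delta> $$ (i,a*p+t) * gram_trunc p G n $$ (a*p+t,e))" by (rule sum_blocks)
      also have "\<dots> = (\<Sum>a<n. \<Sum>t<p. \<Delta> $$ (i,a*p+t) * gram_trunc p G n $$ (a*p+t,e))"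
        using last i by simp
      also have "\<dots> = (\<Sum>s<n*p. \<Delta> $$ (i,s) * gram_trunc p G n $$ (s,e))" by (rule sum_blocks[symmetric])
      finally show ?thesis by simp
    qed
    also have "\<dots> = ?Y $$ (i,e)"
      by (rule mult2_idx[symmetric, OF D gram_carrier i e1])
    also have "\<dots> = 0"
    proof -
      have "e = (e div p)*p + e mod p" by simp
      thus ?thesis using Y0[OF ed i, of "e mod p"] p by simp
    qed
    finally show "(D' * gram_trunc p G (n-1)) $$ (i,e) = 0\<^sub>m r (n*p) $$ (i,e)" using i e by simp
  qed (use D'c G' in auto)
  obtain Gi where Gi: "Gi \<in> carrier_mat (n*p) (n*p)" "gram_trunc p G (n-1) * Gi = 1\<^sub>m (n*p)"
    using minv_props[OF G' qdet] by blast
  have "D' = D' * (gram_trunc p G (n-1) * Gi)" using Gi D'c by simp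
  also have "\<dots> = (D' * gram_trunc p G (n-1)) * Gi" using assoc_mult_mat[OF D'c G' Gi(1)] by simp
  also have "\<dots> = 0\<^sub>m r (n*p)" using DG Gi by simp
  finally have D'0: "D' = 0\<^sub>m r (n*p)" .
  show ?thesis
  proof (rule eq_matI)
    fix i e assume "i < dim_row (0\<^sub>m r ((n+1)*p))" "e < dim_col (0\<^sub>m r ((n+1)*p))"
    hence i: "i < r" and e: "e < (n+1)*p" by auto
    show "\<Delta> $$ (i,e) = 0\<^sub>m r ((n+1)*p) $$ (i,e)"
    proof (cases "e < n*p")
      case True
      have "D' $$ (i,e) = 0" using D'0 i True by simp
      thus ?thesis using i e True by (simp add: D'_def)
    next
      case False
      have "n*p div p \<le> e div p" by (rule div_le_mono) (use False in simp)
      hence "n \<le> e div p" using p by simp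
      hence "e div p = n" using div_le_N[OF e] by simp
      hence "e = n*p + e mod p" by (metis div_mult_mod_eq)
      thus ?thesis using last[OF i, of "e mod p"] i e p by simp
    qed
  qed (use D in auto)
qed

lemma assocd: "dim_col A = dim_row B \<Longrightarrow> dim_col B = dim_row C \<Longrightarrow> A * B * C = A * (B * (C::'a::semiring_0 mat))"
  by (rule assoc_mult_mat[of _ "dim_row A" "dim_col A" _ "dim_col B" _ "dim_col C"]) auto

lemma addmultd: "dim_row A = dim_row B \<Longrightarrow> dim_col A = dim_col B \<Longrightarrow> dim_col A = dim_row C \<Longrightarrow> (A + B) * C = A * C + B * (C::'a::semiring_0 mat)"
  by (rule add_mult_distrib_mat[of _ "dim_row A" "dim_col A"]) auto

lemma multaddd: "dim_row B = dim_row C \<Longrightarrow> dim_col B = dim_col C \<Longrightarrow> dim_col A = dim_row B \<Longrightarrow> A * (B + C) = A * B + A * (C::'a::semiring_0 mat)"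
  by (rule mult_add_distrib_mat[of _ "dim_row A" "dim_col A" _ "dim_col B"]) auto

lemma minusmultd: "dim_row A = dim_row B \<Longrightarrow> dim_col A = dim_col B \<Longrightarrow> dim_col A = dim_row C \<Longrightarrow> (A - B) * C = A * C - B * (C::'a::ring mat)"
  by (rule minus_mult_distrib_mat[of _ "dim_row A" "dim_col A"]) auto

lemma multminusd: "dim_row B = dim_row C \<Longrightarrow> dim_col B = dim_col C \<Longrightarrow> dim_col A = dim_row B \<Longrightarrow> A * (B - C) = A * B - A * (C::'a::ring mat)"
  by (rule mult_minus_distrib_mat[of _ "dim_row A" "dim_col A" _ "dim_col B"]) auto

lemma zero_addd: "dim_row A = n \<Longrightarrow> dim_col A = m \<Longrightarrow> 0\<^sub>m n m + A = (A::'a::monoid_add mat)"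
  by (intro eq_matI) auto
lemma add_zerod: "dim_row A = n \<Longrightarrow> dim_col A = m \<Longrightarrow> A + 0\<^sub>m n m = (A::'a::monoid_add mat)"
  by (intro eq_matI) auto

lemmas mat_alg = assocd addmultd multaddd minusmultd multminusd zero_addd add_zerod

lemma inv_cancel: "A * B = 1\<^sub>m n \<Longrightarrow> dim_col A = dim_row B \<Longrightarrow> dim_col B = dim_row C \<Longrightarrow> dim_row C = n \<Longrightarrow> A * (B * C) = (C :: 'a::semiring_1 mat)"
proof -
  assume a: "A * B = 1\<^sub>m n" "dim_col A = dim_row B" "dim_col B = dim_row C" "dim_row C = n"
  have "A * (B * C) = A * B * C" by (rule assocd[symmetric]) (use a in auto)
  thus ?thesis using a by simp
qed

lemma Wm_dim:
  assumes "\<forall>k. minv (H k) \<in> carrier_mat p p"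
  shows "dim_row (Wm p N S1 H S2 m) = (N+1)*p" "dim_col (Wm p N S1 H S2 m) = (N+1)*p"
  using Wm_carrier[of m H p N S1 S2] assms by auto

lemma gauss_blocks_r:
  assumes gf: "gauss_factorization p G S1 H S2" and G: "\<forall>a b. G a b \<in> carrier_mat p p"
    and p: "p > 0" and k: "k \<le> N" and l: "l \<le> N"
  shows "Rw p N S1 k * (gram_trunc p G N * transpose_mat (Rw p N S2 l)) = (if k = l then H k else 0\<^sub>m p p)"
  using gauss_blocks[OF gf G p k l] by (simp add: assocd)

lemma W_right:
  assumes gf: "gauss_factorization p G S1 H S2" and G: "\<forall>a b. G a b \<in> carrier_mat p p" and p: "p > 0"
    and Hi: "\<forall>k. minv (H k) \<in> carrier_mat p p \<and> minv (H k) * H k = 1\<^sub>m p"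
    and mN: "m \<le> N" and l: "l \<le> N"
  shows "Wm p N S1 H S2 m * (gram_trunc p G N * transpose_mat (Rw p N S2 l))
       = (if l \<le> m then transpose_mat (Rw p N S2 l) else 0\<^sub>m ((N+1)*p) p)"
  using mN
proof (induction m)
  have md: "dim_row (minv (H k)) = p" "dim_col (minv (H k)) = p" for k using Hi by auto
  case 0
  have "Tk p N S1 H S2 0 * (gram_trunc p G N * transpose_mat (Rw p N S2 l))
     = transpose_mat (Rw p N S2 0) * (minv (H 0) * (Rw p N S1 0 * (gram_trunc p G N * transpose_mat (Rw p N S2 l))))"
    using Hi unfolding Tk_def by (simp add: assocd carrier_matD md)
  also have "\<dots> = (if l \<le> 0 then transpose_mat (Rw p N S2 l) else 0\<^sub>m ((N+1)*p) p)"
    using Hi l by (simp add: gauss_blocks_r[OF gf G p _ l] carrier_matD md)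
  finally show ?case by simp
next
  case (Suc m)
  have md: "dim_row (minv (H k)) = p" "dim_col (minv (H k)) = p" for k using Hi by auto
  have "Tk p N S1 H S2 (Suc m) * (gram_trunc p G N * transpose_mat (Rw p N S2 l))
     = transpose_mat (Rw p N S2 (Suc m)) * (minv (H (Suc m)) * (Rw p N S1 (Suc m) * (gram_trunc p G N * transpose_mat (Rw p N S2 l))))"
    using Hi unfolding Tk_def by (simp add: assocd carrier_matD md)
  also have "\<dots> = (if l = Suc m then transpose_mat (Rw p N S2 l) else 0\<^sub>m ((N+1)*p) p)"
    using Hi l Suc.prems by (simp add: gauss_blocks_r[OF gf G p _ l] carrier_matD md)
  finally have T: "Tk p N S1 H S2 (Suc m) * (gram_trunc p G N * transpose_mat (Rw p N S2 l)) = (if l = Suc m then transpose_mat (Rw p N S2 l) else 0\<^sub>m ((N+1)*p) p)" .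
  have "Wm p N S1 H S2 (Suc m) * (gram_trunc p G N * transpose_mat (Rw p N S2 l))
    = Wm p N S1 H S2 m * (gram_trunc p G N * transpose_mat (Rw p N S2 l)) + Tk p N S1 H S2 (Suc m) * (gram_trunc p G N * transpose_mat (Rw p N S2 l))"
    using Hi by (simp add: addmultd Wm_dim Tk_def carrier_matD md)
  also have "\<dots> = (if l \<le> Suc m then transpose_mat (Rw p N S2 l) else 0\<^sub>m ((N+1)*p) p)"
    unfolding T Suc.IH[OF Suc_leD[OF Suc.prems]] by (auto simp: zero_addd add_zerod)
  finally show ?case .
qed

lemma W_left:
  assumes gf: "gauss_factorization p G S1 H S2" and G: "\<forall>a b. G a b \<in> carrier_mat p p" and p: "p > 0"
    and Hi: "\<forall>k. minv (H k) \<in> carrier_mat p p \<and> H k * minv (H k) = 1\<^sub>m p"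
    and mN: "m \<le> N" and l: "l \<le> N"
  shows "Rw p N S1 l * (gram_trunc p G N * Wm p N S1 H S2 m)
       = (if l \<le> m then Rw p N S1 l else 0\<^sub>m p ((N+1)*p))"
  using mN
proof (induction m)
  have md: "dim_row (minv (H k)) = p" "dim_col (minv (H k)) = p" for k using Hi by auto
  case 0
  have "Rw p N S1 l * (gram_trunc p G N * Tk p N S1 H S2 0)
     = (Rw p N S1 l * (gram_trunc p G N * transpose_mat (Rw p N S2 0))) * (minv (H 0) * Rw p N S1 0)"
    using Hi unfolding Tk_def by (simp add: assocd carrier_matD md)
  also have "\<dots> = (if l = 0 then H 0 * (minv (H 0) * Rw p N S1 0) else 0\<^sub>m p p * (minv (H 0) * Rw p N S1 0))"
    using l by (simp add: gauss_blocks_r[OF gf G p l])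
  also have "\<dots> = (if l \<le> 0 then Rw p N S1 l else 0\<^sub>m p ((N+1)*p))"
    using inv_cancel[of "H 0" "minv (H 0)" p "Rw p N S1 0"] Hi gf unfolding gauss_factorization_def by (auto simp: md carrier_matD)
  finally show ?case by simp
next
  case (Suc m)
  have md: "dim_row (minv (H k)) = p" "dim_col (minv (H k)) = p" for k using Hi by auto
  have "Rw p N S1 l * (gram_trunc p G N * Tk p N S1 H S2 (Suc m))
     = (Rw p N S1 l * (gram_trunc p G N * transpose_mat (Rw p N S2 (Suc m)))) * (minv (H (Suc m)) * Rw p N S1 (Suc m))"
    using Hi unfolding Tk_def by (simp add: assocd carrier_matD md)
  also have "\<dots> = (if l = Suc m then H (Suc m) * (minv (H (Suc m)) * Rw p N S1 (Suc m)) else 0\<^sub>m p p * (minv (H (Suc m)) * Rw p N S1 (Suc m)))"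
    using l Suc.prems by (simp add: gauss_blocks_r[OF gf G p l])
  also have "\<dots> = (if l = Suc m then Rw p N S1 l else 0\<^sub>m p ((N+1)*p))"
    using inv_cancel[of "H (Suc m)" "minv (H (Suc m))" p "Rw p N S1 (Suc m)"] Hi gf unfolding gauss_factorization_def by (auto simp: md carrier_matD)
  finally have T: "Rw p N S1 l * (gram_trunc p G N * Tk p N S1 H S2 (Suc m)) = (if l = Suc m then Rw p N S1 l else 0\<^sub>m p ((N+1)*p))" .
  have "Rw p N S1 l * (gram_trunc p G N * Wm p N S1 H S2 (Suc m))
    = Rw p N S1 l * (gram_trunc p G N * Wm p N S1 H S2 m) + Rw p N S1 l * (gram_trunc p G N * Tk p N S1 H S2 (Suc m))"
    using Hi by (simp add: multaddd Wm_dim Tk_def carrier_matD md)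
  also have "\<dots> = (if l \<le> Suc m then Rw p N S1 l else 0\<^sub>m p ((N+1)*p))"
    unfolding T Suc.IH[OF Suc_leD[OF Suc.prems]] by (auto simp: zero_addd add_zerod)
  finally show ?case .
qed

lemma W_kill:
  assumes Hc: "\<forall>k. minv (H k) \<in> carrier_mat p p" and Y: "Y \<in> carrier_mat r ((N+1)*p)"
    and h: "\<forall>k\<le>m. Y * transpose_mat (Rw p N S2 k) = 0\<^sub>m r p"
  shows "Y * Wm p N S1 H S2 m = 0\<^sub>m r ((N+1)*p)"
  using h
proof (induction m)
  case 0
  have md: "dim_row (minv (H k)) = p" "dim_col (minv (H k)) = p" for k using Hc by auto
  have "Y * Wm p N S1 H S2 0 = (Y * transpose_mat (Rw p N S2 0)) * (minv (H 0) * Rw p N S1 0)"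
    using Y by (simp add: Tk_def assocd md carrier_matD)
  thus ?case using 0 md by simp
next
  case (Suc m)
  have md: "dim_row (minv (H k)) = p" "dim_col (minv (H k)) = p" for k using Hc by auto
  have "Y * Wm p N S1 H S2 (Suc m) = Y * Wm p N S1 H S2 m + (Y * transpose_mat (Rw p N S2 (Suc m))) * (minv (H (Suc m)) * Rw p N S1 (Suc m))"
    using Y Hc by (simp add: Tk_def assocd multaddd md carrier_matD Wm_dim)
  thus ?case using Suc md by (simp add: zero_addd)
qed

lemma W_entries_zero:
  assumes Hc: "\<forall>k. minv (H k) \<in> carrier_mat p p" and b1: "block_lower_unitri p S1" and b2: "block_lower_unitri p S2"
    and mN: "m < N" and l: "l < p" and r: "r < (N+1)*p" and p: "p > 0"
  shows "Wm p N S1 H S2 m $$ (r, N*p+l) = 0 \<and> Wm p N S1 H S2 m $$ (N*p+l, r) = 0"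
  using mN
proof (induction m)
  have md: "dim_row (minv (H k)) = p" "dim_col (minv (H k)) = p" for k using Hc by auto
  have Nl: "N*p+l < (N+1)*p" using blk_lt[OF l, of N N] by simp
  have Tz: "Tk p N S1 H S2 k $$ (r, N*p+l) = 0 \<and> Tk p N S1 H S2 k $$ (N*p+l, r) = 0" if k: "k < N" for k
  proof
    have "Tk p N S1 H S2 k $$ (r, N*p+l) = (\<Sum>b<p. (\<Sum>a<p. transpose_mat (Rw p N S2 k) $$ (r,a) * minv (H k) $$ (a,b)) * Rw p N S1 k $$ (b, N*p+l))"
      unfolding Tk_def by (rule mult3_idx[of _ "(N+1)*p" p _ p _ "(N+1)*p"]) (use Hc r Nl in auto)
    also have "\<dots> = 0" using k l Nl p by (auto intro!: sum.neutral simp: Rw_idx blu_zero[OF b1])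
    finally show "Tk p N S1 H S2 k $$ (r, N*p+l) = 0" .
    have "Tk p N S1 H S2 k $$ (N*p+l, r) = (\<Sum>b<p. (\<Sum>a<p. transpose_mat (Rw p N S2 k) $$ (N*p+l,a) * minv (H k) $$ (a,b)) * Rw p N S1 k $$ (b, r))"
      unfolding Tk_def by (rule mult3_idx[of _ "(N+1)*p" p _ p _ "(N+1)*p"]) (use Hc r Nl in auto)
    also have "\<dots> = 0" using k l Nl p by (auto intro!: sum.neutral simp: Rw_idx blu_zero[OF b2])
    finally show "Tk p N S1 H S2 k $$ (N*p+l, r) = 0" .
  qed
  {
    case 0 thus ?case using Tz[of 0] by simp
  next
    case (Suc m)
    have Tc: "Tk p N S1 H S2 (Suc m) \<in> carrier_mat ((N+1)*p) ((N+1)*p)" using Hc by (intro Tk_carrier) auto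
    show ?case using Suc Tz[of "Suc m"] r Nl by (simp add: add_idx[OF Tc])
  }
qed

lemma add_eq_sub: assumes "X + Y = Z" "dim_row X = dim_row Y" "dim_col X = dim_col Y"
  shows "Y = Z - (X :: 'a::ab_group_add mat)"
proof -
  have Z: "Z = X + Y" using assms(1) by simp
  show ?thesis unfolding Z by (rule eq_matI) (use assms(2,3) in auto)
qed

lemma core_orth1:
  fixes R1n R2l Gt B L W Mi :: "complex mat"
  assumes c: "R1n \<in> carrier_mat p D" "R2l \<in> carrier_mat p D" "Gt \<in> carrier_mat D D" "B \<in> carrier_mat D K"
     "L \<in> carrier_mat D K" "W \<in> carrier_mat D D" "Mi \<in> carrier_mat K K"
   and h1: "R1n * (Gt * transpose_mat R2l) = 0\<^sub>m p p"
   and h2: "W * (Gt * transpose_mat R2l) = transpose_mat R2l"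
   and hM: "Mi * (1\<^sub>m K + transpose_mat L * W * B) = 1\<^sub>m K"
  shows "(R1n - R1n * B * Mi * (transpose_mat L * W)) * (Gt + B * transpose_mat L) * transpose_mat R2l = 0\<^sub>m p p"
proof -
  have d: "dim_row R1n = p" "dim_col R1n = D" "dim_row R2l = p" "dim_col R2l = D" "dim_row Gt = D" "dim_col Gt = D"
    "dim_row B = D" "dim_col B = K" "dim_row L = D" "dim_col L = K" "dim_row W = D" "dim_col W = D" "dim_row Mi = K" "dim_col Mi = K"
    using c by auto
  have hM': "Mi * (transpose_mat L * (W * (B * Z))) = Z - Mi * Z" if "dim_row Z = K" for Z
  proof -
    have "Mi * (1\<^sub>m K + transpose_mat L * W * B) * Z = Z" using hM that by simp
    hence "Mi * Z + Mi * (transpose_mat L * (W * (B * Z))) = Z" using d that by (simp add: mat_alg)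
    thus ?thesis by (rule add_eq_sub) (use d that in simp_all)
  qed
  show ?thesis using d h1 h2 hM' 
    apply (simp add: mat_alg)
    apply (rule eq_matI)
    by (simp_all del: index_mult_mat(1))
qed


lemma core_orth2:
  fixes R1l R2n Gt B L W Mi :: "complex mat"
  assumes c: "R1l \<in> carrier_mat p D" "R2n \<in> carrier_mat p D" "Gt \<in> carrier_mat D D" "B \<in> carrier_mat D K"
     "L \<in> carrier_mat D K" "W \<in> carrier_mat D D" "Mi \<in> carrier_mat K K"
   and g1: "R1l * (Gt * transpose_mat R2n) = 0\<^sub>m p p"
   and g2: "R1l * (Gt * W) = R1l"
   and hM: "(1\<^sub>m K + transpose_mat L * W * B) * Mi = 1\<^sub>m K"
  shows "R1l * (Gt + B * transpose_mat L) * (transpose_mat R2n - W * B * Mi * (transpose_mat L * transpose_mat R2n)) = 0\<^sub>m p p"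
proof -
  have d: "dim_row R1l = p" "dim_col R1l = D" "dim_row R2n = p" "dim_col R2n = D" "dim_row Gt = D" "dim_col Gt = D"
    "dim_row B = D" "dim_col B = K" "dim_row L = D" "dim_col L = K" "dim_row W = D" "dim_col W = D" "dim_row Mi = K" "dim_col Mi = K"
    using c by auto
  have g2': "R1l * (Gt * (W * Z)) = R1l * Z" if "dim_row Z = D" for Z
  proof -
    have "R1l * (Gt * W) * Z = R1l * Z" using g2 by simp
    thus ?thesis using d that by (simp add: mat_alg)
  qed
  have hM': "transpose_mat L * (W * (B * (Mi * Z))) = Z - Mi * Z" if "dim_row Z = K" for Z
  proof -
    have "(1\<^sub>m K + transpose_mat L * W * B) * Mi * Z = Z" using hM that by simp
    hence "Mi * Z + transpose_mat L * (W * (B * (Mi * Z))) = Z" using d that by (simp add: mat_alg)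
    thus ?thesis by (rule add_eq_sub) (use d that in simp_all)
  qed
  show ?thesis using d g1 g2' hM'
    apply (simp add: mat_alg)
    apply (rule eq_matI)
    by (simp_all del: index_mult_mat(1))
qed

lemma core_H:
  fixes R1n R2n Gt B L W Mi Hn :: "complex mat"
  assumes c: "R1n \<in> carrier_mat p D" "R2n \<in> carrier_mat p D" "Gt \<in> carrier_mat D D" "B \<in> carrier_mat D K"
     "L \<in> carrier_mat D K" "W \<in> carrier_mat D D" "Mi \<in> carrier_mat K K" "Hn \<in> carrier_mat p p"
   and h1: "R1n * (Gt * transpose_mat R2n) = Hn"
   and h2: "W * (Gt * transpose_mat R2n) = 0\<^sub>m D p"
   and hM: "Mi * (1\<^sub>m K + transpose_mat L * W * B) = 1\<^sub>m K"
   and QW: "(R1n - R1n * B * Mi * (transpose_mat L * W)) * (Gt + B * transpose_mat L) * W = 0\<^sub>m p D"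
  shows "(R1n - R1n * B * Mi * (transpose_mat L * W)) * (Gt + B * transpose_mat L) * (transpose_mat R2n - W * B * Mi * (transpose_mat L * transpose_mat R2n))
     = Hn + R1n * B * Mi * (transpose_mat L * transpose_mat R2n)"
proof -
  have d: "dim_row R1n = p" "dim_col R1n = D" "dim_row R2n = p" "dim_col R2n = D" "dim_row Gt = D" "dim_col Gt = D"
    "dim_row B = D" "dim_col B = K" "dim_row L = D" "dim_col L = K" "dim_row W = D" "dim_col W = D" "dim_row Mi = K" "dim_col Mi = K"
    "dim_row Hn = p" "dim_col Hn = p"
    using c by auto
  define Y where "Y = (R1n - R1n * B * Mi * (transpose_mat L * W)) * (Gt + B * transpose_mat L)"
  have Yd: "dim_row Y = p" "dim_col Y = D" using d by (simp_all add: Y_def)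
  have "Y * (transpose_mat R2n - W * B * Mi * (transpose_mat L * transpose_mat R2n))
      = Y * transpose_mat R2n - (Y * W) * (B * (Mi * (transpose_mat L * transpose_mat R2n)))"
    using d Yd by (simp add: mat_alg)
  also have "Y * W = 0\<^sub>m p D" using QW by (simp add: Y_def)
  also have "Y * transpose_mat R2n = Hn + R1n * B * Mi * (transpose_mat L * transpose_mat R2n) + 0\<^sub>m p p"
  proof -
    have hM': "Mi * (transpose_mat L * (W * (B * Z))) = Z - Mi * Z" if "dim_row Z = K" for Z
    proof -
      have "Mi * (1\<^sub>m K + transpose_mat L * W * B) * Z = Z" using hM that by simp
      hence "Mi * Z + Mi * (transpose_mat L * (W * (B * Z))) = Z" using d that by (simp add: mat_alg)
      thus ?thesis by (rule add_eq_sub) (use d that in simp_all)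
    qed
    show ?thesis unfolding Y_def using d h1 h2 hM'
      apply (simp add: mat_alg)
      apply (rule eq_matI)
      by (simp_all del: index_mult_mat(1))
  qed
  finally show ?thesis using d unfolding Y_def[symmetric]
    apply -
    apply (rule eq_matI)
    by (simp_all del: index_mult_mat(1))
qed

lemma core_det:
  fixes Gt B L W Gi :: "complex mat"
  assumes c: "Gt \<in> carrier_mat D D" "B \<in> carrier_mat D K"
     "L \<in> carrier_mat D K" "W \<in> carrier_mat D D" "Gi \<in> carrier_mat D D"
   and hW: "W * Gt = 1\<^sub>m D"
   and hG: "(Gt + B * transpose_mat L) * Gi = 1\<^sub>m D"
  shows "(1\<^sub>m K + transpose_mat L * W * B) * (1\<^sub>m K - transpose_mat L * Gi * B) = 1\<^sub>m K"
proof -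
  have d: "dim_row Gt = D" "dim_col Gt = D"
    "dim_row B = D" "dim_col B = K" "dim_row L = D" "dim_col L = K" "dim_row W = D" "dim_col W = D" "dim_row Gi = D" "dim_col Gi = D"
    using c by auto
  have hW': "W * (Gt * Z) = Z" if "dim_row Z = D" for Z
  proof -
    have "W * Gt * Z = Z" using hW that by simp
    thus ?thesis using d that by (simp add: mat_alg)
  qed
  have hG': "B * (transpose_mat L * (Gi * Z)) = Z - Gt * (Gi * Z)" if "dim_row Z = D" for Z
  proof -
    have "(Gt + B * transpose_mat L) * Gi * Z = Z" using hG that by simp
    hence "Gt * (Gi * Z) + B * (transpose_mat L * (Gi * Z)) = Z" using d that by (simp add: mat_alg)
    thus ?thesis by (rule add_eq_sub) (use d that in simp_all)
  qed
  show ?thesis using d hW' hG'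
    apply (simp add: mat_alg)
    apply (rule eq_matI)
    by (simp_all del: index_mult_mat(1))
qed

lemma uniq_row0:
  assumes p: "p > 0" and n: "n \<ge> 1" 
    and qdet: "det (gram_trunc p G (n-1)) \<noteq> 0"
    and D: "\<Delta> \<in> carrier_mat r ((n+1)*p)"
    and last: "\<And>i l. i < r \<Longrightarrow> l < p \<Longrightarrow> \<Delta> $$ (i, n*p+l) = 0"
    and Y0: "\<And>l i t. l < n \<Longrightarrow> i < r \<Longrightarrow> t < p \<Longrightarrow> (\<Delta> * gram_trunc p G n) $$ (i, l*p+t) = 0"
  shows "\<Delta> = 0\<^sub>m r ((n+1)*p)"
proof -
  let ?Y = "\<Delta> * gram_trunc p G n"
  have Yc: "?Y \<in> carrier_mat r ((n+1)*p)" using D by auto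
  define D' where "D' = mat r (n*p) (\<lambda>(i,e). \<Delta> $$ (i,e))"
  have nn: "(n - 1 + 1) * p = n * p" using n by simp
  have nn2: "p + (n - Suc 0) * p = n * p" using n by (cases n) auto
  have G': "gram_trunc p G (n-1) \<in> carrier_mat (n*p) (n*p)" using gram_carrier[of p G "n-1"] nn by simp
  have D'c: "D' \<in> carrier_mat r (n*p)" by (simp add: D'_def)
  have DG: "D' * gram_trunc p G (n-1) = 0\<^sub>m r (n*p)"
  proof (rule eq_matI)
    fix i e assume "i < dim_row (0\<^sub>m r (n*p))" "e < dim_col (0\<^sub>m r (n*p))"
    hence i: "i < r" and e: "e < n*p" by auto
    have ed: "e div p < n" using e by (simp add: less_mult_imp_div_less)
    have e1: "e < (n+1)*p" using e by simp
    have "(D' * gram_trunc p G (n-1)) $$ (i,e) = (\<Sum>s<n*p. \<Delta> $$ (i,s) * gram_trunc p G n $$ (s,e))"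
      by (subst mult2_idx[OF D'c G' i e]) (use i e in \<open>auto simp: D'_def gram_trunc_def nn nn2 intro!: sum.cong\<close>)
    also have "\<dots> = (\<Sum>s<(n+1)*p. \<Delta> $$ (i,s) * gram_trunc p G n $$ (s,e))"
    proof -
      have "(\<Sum>s<(n+1)*p. \<Delta> $$ (i,s) * gram_trunc p G n $$ (s,e))
          = (\<Sum>a<n+1. \<Sum>t<p. \<Delta> $$ (i,a*p+t) * gram_trunc p G n $$ (a*p+t,e))" by (rule sum_blocks)
      also have "\<dots> = (\<Sum>a<n. \<Sum>t<p. \<Delta> $$ (i,a*p+t) * gram_trunc p G n $$ (a*p+t,e))"
        using last i by simp
      also have "\<dots> = (\<Sum>s<n*p. \<Delta> $$ (i,s) * gram_trunc p G n $$ (s,e))" by (rule sum_blocks[symmetric])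
      finally show ?thesis by simp
    qed
    also have "\<dots> = ?Y $$ (i,e)"
      by (rule mult2_idx[symmetric, OF D gram_carrier i e1])
    also have "\<dots> = 0"
    proof -
      have "e = (e div p)*p + e mod p" by simp
      thus ?thesis using Y0[OF ed i, of "e mod p"] p by simp
    qed
    finally show "(D' * gram_trunc p G (n-1)) $$ (i,e) = 0\<^sub>m r (n*p) $$ (i,e)" using i e by simp
  qed (use D'c G' in auto)
  obtain Gi where Gi: "Gi \<in> carrier_mat (n*p) (n*p)" "gram_trunc p G (n-1) * Gi = 1\<^sub>m (n*p)"
    using minv_props[OF G' qdet] by blast
  have "D' = D' * (gram_trunc p G (n-1) * Gi)" using Gi D'c by simp
  also have "\<dots> = (D' * gram_trunc p G (n-1)) * Gi" using assoc_mult_mat[OF D'c G' Gi(1)] by simp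
  also have "\<dots> = 0\<^sub>m r (n*p)" using DG Gi by simp
  finally have D'0: "D' = 0\<^sub>m r (n*p)" .
  show ?thesis
  proof (rule eq_matI)
    fix i e assume "i < dim_row (0\<^sub>m r ((n+1)*p))" "e < dim_col (0\<^sub>m r ((n+1)*p))"
    hence i: "i < r" and e: "e < (n+1)*p" by auto
    show "\<Delta> $$ (i,e) = 0\<^sub>m r ((n+1)*p) $$ (i,e)"
    proof (cases "e < n*p")
      case True
      have "D' $$ (i,e) = 0" using D'0 i True by simp
      thus ?thesis using i e True by (simp add: D'_def)
    next
      case False
      have "n*p div p \<le> e div p" by (rule div_le_mono) (use False in simp)
      hence "n \<le> e div p" using p by simp
      hence "e div p = n" using div_le_N[OF e] by simp
      hence "e = n*p + e mod p" by (metis div_mult_mod_eq)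
      thus ?thesis using last[OF i, of "e mod p"] i e p by simp
    qed
  qed (use D in auto)
qed


lemma gram_transpose:
  assumes G: "\<forall>a b. G a b \<in> carrier_mat p p" and p: "p > 0"
  shows "gram_trunc p (\<lambda>a b. transpose_mat (G b a)) N = transpose_mat (gram_trunc p G N)"
  by (rule eq_matI) (use p in \<open>auto simp: gram_trunc_def tr_idx[OF G[rule_format]]\<close>)

lemma carriers_nf[simp]: "Rw p N S k \<in> carrier_mat p (p + N*p)" "gram_trunc p G N \<in> carrier_mat (p+N*p) (p+N*p)"
  "Bm p q \<kappa> \<beta> N \<in> carrier_mat (p+N*p) (NN q \<kappa> * p)" "Lm p q xs \<kappa> N \<in> carrier_mat (p+N*p) (NN q \<kappa> * p)"
  "Xy p N y \<in> carrier_mat (p+N*p) p"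
  using Rw_carrier[of p N S k] gram_carrier[of p G N] Bm_carrier[of p q \<kappa> \<beta> N] Lm_carrier[of p q xs \<kappa> N] Xy_carrier[of p N y]
  by simp_all

lemma uhat_dim:
  assumes "\<forall>a b. u a b \<in> carrier_mat p p"
  shows "\<forall>a b. uhat p q xs \<kappa> \<beta> u a b \<in> carrier_mat p p"
  using assms by (auto simp: uhat_def vform_def)

lemma Mmat_eq:
  assumes p: "p > 0" and Hc: "\<forall>k. minv (H k) \<in> carrier_mat p p" and b1: "block_lower_unitri p S1"
    and b2: "block_lower_unitri p S2" and mN: "m \<le> N"
  shows "Mmat p q xs \<kappa> \<beta> S1 H S2 m = 1\<^sub>m (NN q \<kappa> * p) + transpose_mat (Lm p q xs \<kappa> N) * Wm p N S1 H S2 m * Bm p q \<kappa> \<beta> N"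
proof -
  have Wc: "Wm p N S1 H S2 m \<in> carrier_mat ((N+1)*p) ((N+1)*p)" using Hc by (intro Wm_carrier) auto
  have Lc: "transpose_mat (Lm p q xs \<kappa> N) * Wm p N S1 H S2 m \<in> carrier_mat (NN q \<kappa> * p) ((N+1)*p)"
    using Wc by auto
  have Hc': "\<forall>k\<le>m. minv (H k) \<in> carrier_mat p p" using Hc by auto
  show ?thesis unfolding Mmat_def jet01_PM[OF p Hc' b1 b2 mN] pair_col_PM[OF Lc p] by simp
qed

lemma M_det:
  assumes p: "p > 0" and gf: "gauss_factorization p u S1 H S2" and u_dim: "\<forall>a b. u a b \<in> carrier_mat p p"
    and qd_hat: "quasidefinite p (uhat p q xs \<kappa> \<beta> u)"
    and Hi: "\<forall>k. minv (H k) \<in> carrier_mat p p \<and> H k * minv (H k) = 1\<^sub>m p \<and> minv (H k) * H k = 1\<^sub>m p"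
  shows "det (Mmat p q xs \<kappa> \<beta> S1 H S2 m) \<noteq> 0"
proof -
  have b1: "block_lower_unitri p S1" and b2: "block_lower_unitri p S2" using gf unfolding gauss_factorization_def by auto
  have Hc: "\<forall>k. minv (H k) \<in> carrier_mat p p" using Hi by auto
  let ?D = "(m+1)*p" and ?K = "NN q \<kappa> * p"
  define W where "W = Wm p m S1 H S2 m"
  define Gt where "Gt = gram_trunc p u m"
  define B where "B = Bm p q \<kappa> \<beta> m"
  define L where "L = Lm p q xs \<kappa> m"
  have Wc: "W \<in> carrier_mat ?D ?D" unfolding W_def using Hc by (intro Wm_carrier) auto
  have Gc: "Gt \<in> carrier_mat ?D ?D" unfolding Gt_def by (rule gram_carrier)
  have Bc: "B \<in> carrier_mat ?D ?K" unfolding B_def by (rule Bm_carrier)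
  have Lc: "L \<in> carrier_mat ?D ?K" unfolding L_def by (rule Lm_carrier)
  have M: "Mmat p q xs \<kappa> \<beta> S1 H S2 m = 1\<^sub>m ?K + transpose_mat L * W * B"
    unfolding W_def L_def B_def by (rule Mmat_eq[OF p Hc b1 b2 le_refl])
  have WG: "W * Gt = 1\<^sub>m ?D"
  proof -
    define Y where "Y = W * Gt - 1\<^sub>m ?D"
    have Yc: "Y \<in> carrier_mat ?D ?D" unfolding Y_def using Wc Gc by auto
    have orth: "Y * transpose_mat (Rw p m S2 l) = 0\<^sub>m ?D p" if "l < m + 1" for l
    proof -
      have "Y * transpose_mat (Rw p m S2 l) = W * (Gt * transpose_mat (Rw p m S2 l)) - transpose_mat (Rw p m S2 l)"
        unfolding Y_def using Wc Gc by (simp add: mat_alg carrier_matD)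
      also have "W * (Gt * transpose_mat (Rw p m S2 l)) = transpose_mat (Rw p m S2 l)"
        unfolding W_def Gt_def using W_right[OF gf u_dim p _ le_refl, of l] Hi that by simp
      moreover have "transpose_mat (Rw p m S2 l) \<in> carrier_mat ?D p" by simp
      ultimately show ?thesis by (simp add: minus_r_inv_mat)
    qed
    have Y0: "Y $$ (i,e) = 0" if "i < ?D" "e < ?D" for i e
    proof -
      have "e div p < m + 1" using div_le_N[OF that(2)] by simp
      moreover have "e = (e div p) * p + e mod p" by simp
      ultimately show ?thesis using conv_tri[OF Yc b2 p le_refl orth, of "e div p" i "e mod p"] that p by simp
    qed
    show ?thesis
    proof (rule eq_matI)
      fix i e assume "i < dim_row (1\<^sub>m ?D)" "e < dim_col (1\<^sub>m ?D)"
      hence ie: "i < ?D" "e < ?D" by auto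
      have "Y $$ (i,e) = (W * Gt) $$ (i,e) - 1\<^sub>m ?D $$ (i,e)" unfolding Y_def using ie Wc Gc by simp
      thus "(W * Gt) $$ (i,e) = 1\<^sub>m ?D $$ (i,e)" using Y0[OF ie] by simp
    qed (use Wc Gc in auto)
  qed
  have Gh: "gram_trunc p (uhat p q xs \<kappa> \<beta> u) m = Gt + B * transpose_mat L"
    unfolding Gt_def B_def L_def by (rule Ghat_eq[OF p u_dim])
  have dGh: "det (Gt + B * transpose_mat L) \<noteq> 0" using qd_hat Gh unfolding quasidefinite_def by metis
  have Ghc: "Gt + B * transpose_mat L \<in> carrier_mat ?D ?D" using Gc Bc Lc by auto
  obtain Gi where Gi: "Gi \<in> carrier_mat ?D ?D" "(Gt + B * transpose_mat L) * Gi = 1\<^sub>m ?D"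
    using minv_props[OF Ghc dGh] by blast
  have MX: "(1\<^sub>m ?K + transpose_mat L * W * B) * (1\<^sub>m ?K - transpose_mat L * Gi * B) = 1\<^sub>m ?K"
    by (rule core_det[OF Gc Bc Lc Wc Gi(1) WG Gi(2)])
  have Mc: "1\<^sub>m ?K + transpose_mat L * W * B \<in> carrier_mat ?K ?K" using Lc Wc Bc by auto
  have Xc: "1\<^sub>m ?K - transpose_mat L * Gi * B \<in> carrier_mat ?K ?K" using Lc Gi Bc by auto
  have "det (1\<^sub>m ?K + transpose_mat L * W * B) * det (1\<^sub>m ?K - transpose_mat L * Gi * B) = 1"
    using det_mult[OF Mc Xc] MX by simp
  thus ?thesis unfolding M by auto
qed

lemma sub_zero_eq: assumes h: "A - B = 0\<^sub>m r c" and A: "A \<in> carrier_mat r c" and B: "B \<in> carrier_mat r c"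
  shows "A = (B :: 'a::ab_group_add mat)"
proof (rule eq_matI)
  fix i j assume ij: "i < dim_row B" "j < dim_col B"
  have "(A - B) $$ (i,j) = A $$ (i,j) - B $$ (i,j)" using ij A B by simp
  moreover have "(A - B) $$ (i,j) = 0" unfolding h using ij B by simp
  ultimately show "A $$ (i,j) = B $$ (i,j)" by simp
qed (use A B in auto)

lemma tr3: "A \<in> carrier_mat a b \<Longrightarrow> B \<in> carrier_mat b c \<Longrightarrow> C \<in> carrier_mat c d \<Longrightarrow>
  transpose_mat (A * B * C) = transpose_mat C * transpose_mat B * transpose_mat (A :: 'a::comm_semiring_0 mat)"
proof -
  assume A: "A \<in> carrier_mat a b" and B: "B \<in> carrier_mat b c" and C: "C \<in> carrier_mat c d"
  have AB: "A * B \<in> carrier_mat a c" using A B by auto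
  have "transpose_mat (A * B * C) = transpose_mat C * transpose_mat (A * B)" by (rule transpose_mult[OF AB C])
  also have "transpose_mat (A * B) = transpose_mat B * transpose_mat A" by (rule transpose_mult[OF A B])
  also have "transpose_mat C * (transpose_mat B * transpose_mat A) = transpose_mat C * transpose_mat B * transpose_mat A"
    by (rule assoc_mult_mat[symmetric, of _ d c _ b _ a]) (use A B C in auto)
  finally show ?thesis .
qed

lemma carrier_dimI: "dim_row A = r \<Longrightarrow> dim_col A = c \<Longrightarrow> A \<in> carrier_mat r c" by auto

lemma formulas:
  assumes p: "p > 0" and n: "n \<ge> 1"
    and gf: "gauss_factorization p u S1 H S2" and gfh: "gauss_factorization p (uhat p q xs \<kappa> \<beta> u) Sh1 Hh Sh2"
    and u_dim: "\<forall>a b. u a b \<in> carrier_mat p p"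
    and qd_hat: "quasidefinite p (uhat p q xs \<kappa> \<beta> u)"
    and Hi: "\<forall>k. minv (H k) \<in> carrier_mat p p \<and> H k * minv (H k) = 1\<^sub>m p \<and> minv (H k) * H k = 1\<^sub>m p"
    and Mdet: "det (Mmat p q xs \<kappa> \<beta> S1 H S2 (n - 1)) \<noteq> 0"
  shows "bpoly p Sh1 n = bpoly p S1 n
          - const_pmat (pair_row p q \<kappa> \<beta> (bpoly p S1 n) * minv (Mmat p q xs \<kappa> \<beta> S1 H S2 (n - 1)))
            * jet01 p q xs \<kappa> (CDkernel p S1 H S2 (n - 1))
      \<and> (\<forall>y::complex. transpose_mat (meval (bpoly p Sh2 n) y) = transpose_mat (meval (bpoly p S2 n) y)
          - pair_row p q \<kappa> \<beta> (kernel_at_y (CDkernel p S1 H S2 (n - 1)) y)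
            * minv (Mmat p q xs \<kappa> \<beta> S1 H S2 (n - 1)) * transpose_mat (jet p q xs \<kappa> (bpoly p S2 n)))
      \<and> Hh n = H n + pair_row p q \<kappa> \<beta> (bpoly p S1 n) * minv (Mmat p q xs \<kappa> \<beta> S1 H S2 (n - 1))
            * transpose_mat (jet p q xs \<kappa> (bpoly p S2 n))"
proof -
  have b1: "block_lower_unitri p S1" and b2: "block_lower_unitri p S2" and Hc: "\<forall>k. H k \<in> carrier_mat p p"
    using gf unfolding gauss_factorization_def by auto
  have bh1: "block_lower_unitri p Sh1" and bh2: "block_lower_unitri p Sh2" and Hhc: "\<forall>k. Hh k \<in> carrier_mat p p"
    using gfh unfolding gauss_factorization_def by auto
  have uh_dim: "\<forall>a b. uhat p q xs \<kappa> \<beta> u a b \<in> carrier_mat p p" by (rule uhat_dim[OF u_dim])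
  have Hic: "\<forall>k. minv (H k) \<in> carrier_mat p p" using Hi by auto
  let ?D = "(n+1)*p" and ?K = "NN q \<kappa> * p"
  define W where "W = Wm p n S1 H S2 (n-1)"
  define Gt where "Gt = gram_trunc p u n"
  define B where "B = Bm p q \<kappa> \<beta> n"
  define L where "L = Lm p q xs \<kappa> n"
  define R1 where "R1 = Rw p n S1"
  define R2 where "R2 = Rw p n S2"
  define Rh1 where "Rh1 = Rw p n Sh1"
  define Rh2 where "Rh2 = Rw p n Sh2"
  have Wc: "W \<in> carrier_mat ?D ?D" unfolding W_def using Hic by (intro Wm_carrier) auto
  have Gc: "Gt \<in> carrier_mat ?D ?D" unfolding Gt_def by (rule gram_carrier)
  have Bc: "B \<in> carrier_mat ?D ?K" unfolding B_def by (rule Bm_carrier)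
  have Lc: "L \<in> carrier_mat ?D ?K" unfolding L_def by (rule Lm_carrier)
  have Rc: "R1 k \<in> carrier_mat p ?D" "R2 k \<in> carrier_mat p ?D" "Rh1 k \<in> carrier_mat p ?D" "Rh2 k \<in> carrier_mat p ?D" for k
    unfolding R1_def R2_def Rh1_def Rh2_def by (rule Rw_carrier)+
  have M: "Mmat p q xs \<kappa> \<beta> S1 H S2 (n-1) = 1\<^sub>m ?K + transpose_mat L * W * B"
    unfolding W_def L_def B_def by (rule Mmat_eq[OF p Hic b1 b2]) simp
  define Mi where "Mi = minv (Mmat p q xs \<kappa> \<beta> S1 H S2 (n-1))"
  have Mc: "1\<^sub>m ?K + transpose_mat L * W * B \<in> carrier_mat ?K ?K" using Lc Wc Bc by auto
  have Mc': "Mmat p q xs \<kappa> \<beta> S1 H S2 (n-1) \<in> carrier_mat ?K ?K" using Mc M by simp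
  have mp: "Mi \<in> carrier_mat ?K ?K \<and> Mmat p q xs \<kappa> \<beta> S1 H S2 (n-1) * Mi = 1\<^sub>m ?K \<and> Mi * Mmat p q xs \<kappa> \<beta> S1 H S2 (n-1) = 1\<^sub>m ?K"
    unfolding Mi_def by (rule minv_props[OF Mc' Mdet])
  have Mi: "Mi \<in> carrier_mat ?K ?K" "(1\<^sub>m ?K + transpose_mat L * W * B) * Mi = 1\<^sub>m ?K" "Mi * (1\<^sub>m ?K + transpose_mat L * W * B) = 1\<^sub>m ?K"
    using mp unfolding M by auto
  have Gh: "gram_trunc p (uhat p q xs \<kappa> \<beta> u) n = Gt + B * transpose_mat L"
    unfolding Gt_def B_def L_def by (rule Ghat_eq[OF p u_dim])
  have Ghc: "Gt + B * transpose_mat L \<in> carrier_mat ?D ?D" using Gc Bc Lc by auto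
  define Q where "Q = R1 n - R1 n * B * Mi * (transpose_mat L * W)"
  have dms: "dim_row (R1 k) = p" "dim_col (R1 k) = ?D" "dim_row (R2 k) = p" "dim_col (R2 k) = ?D"
    "dim_row (Rh1 k) = p" "dim_col (Rh1 k) = ?D" "dim_row (Rh2 k) = p" "dim_col (Rh2 k) = ?D"
    "dim_row W = ?D" "dim_col W = ?D" "dim_row Gt = ?D" "dim_col Gt = ?D" "dim_row B = ?D" "dim_col B = ?K"
    "dim_row L = ?D" "dim_col L = ?K" "dim_row Mi = ?K" "dim_col Mi = ?K" for k
    using Rc[of k] Wc Gc Bc Lc Mi(1) by auto
  have Qc: "Q \<in> carrier_mat p ?D" unfolding Q_def by (intro carrier_dimI) (simp_all add: dms)
  have Qd: "dim_row Q = p" "dim_col Q = ?D" using Qc by auto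
  note dms = dms Qd
  have Q1: "Q * (Gt + B * transpose_mat L) * transpose_mat (R2 l) = 0\<^sub>m p p" if l: "l < n" for l
  proof -
    have h1: "R1 n * (Gt * transpose_mat (R2 l)) = 0\<^sub>m p p"
      using gauss_blocks_r[OF gf u_dim p le_refl, of l] l unfolding R1_def R2_def Gt_def by simp
    have h2: "W * (Gt * transpose_mat (R2 l)) = transpose_mat (R2 l)"
    proof -
      have "l \<le> n - 1" using l by simp
      thus ?thesis using W_right[OF gf u_dim p, of "n-1" n l] Hi l unfolding W_def Gt_def R2_def by simp
    qed
    show ?thesis unfolding Q_def by (rule core_orth1[OF Rc(1) Rc(2) Gc Bc Lc Wc Mi(1) h1 h2 Mi(3)])
  qed
  have nD: "n*p + l < ?D" if "l < p" for l using blk_lt[OF that, of n n] by simp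
  have Gh': "gram_trunc p (uhat p q xs \<kappa> \<beta> u) n = Gt + B * transpose_mat L" by (rule Gh)
  have Rh1_orth: "Rh1 n * (Gt + B * transpose_mat L) * transpose_mat (Rh2 l) = 0\<^sub>m p p" if l: "l < n" for l
    using gauss_blocks[OF gfh uh_dim p, of n n l] l unfolding Rh1_def Rh2_def Gh by simp
  have QY0: "(Q * (Gt + B * transpose_mat L)) $$ (i, l*p+t) = 0" if "l < n" "i < p" "t < p" for l i t
  proof (rule conv_tri[OF _ b2 p _ _ that])
    show "Q * (Gt + B * transpose_mat L) \<in> carrier_mat p ((n+1)*p)" by (intro carrier_dimI) (simp_all add: dms)
    show "n \<le> n + 1" by simp
    show "Q * (Gt + B * transpose_mat L) * transpose_mat (Rw p n S2 l') = 0\<^sub>m p p" if "l' < n" for l'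
      using Q1[OF that] unfolding R2_def .
  qed
  have RY0: "(Rh1 n * (Gt + B * transpose_mat L)) $$ (i, l*p+t) = 0" if "l < n" "i < p" "t < p" for l i t
  proof (rule conv_tri[OF _ bh2 p _ _ that])
    show "Rh1 n * (Gt + B * transpose_mat L) \<in> carrier_mat p ((n+1)*p)" by (intro carrier_dimI) (simp_all add: dms)
    show "n \<le> n + 1" by simp
    show "Rh1 n * (Gt + B * transpose_mat L) * transpose_mat (Rw p n Sh2 l') = 0\<^sub>m p p" if "l' < n" for l'
      using Rh1_orth[OF that] unfolding Rh2_def .
  qed
  have QR: "Rh1 n = Q"
  proof -
    have Dc: "Q - Rh1 n \<in> carrier_mat p ?D" using Qc by (intro carrier_dimI) (simp_all add: dms)
    have "Q - Rh1 n = 0\<^sub>m p ?D"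
    proof (rule uniq_row0[OF p n _ Dc])
      show "det (gram_trunc p (uhat p q xs \<kappa> \<beta> u) (n - 1)) \<noteq> 0" using qd_hat unfolding quasidefinite_def by auto
      show "(Q - Rh1 n) $$ (i, n*p+l) = 0" if "i < p" "l < p" for i l
      proof -
        have "(R1 n * B * Mi * (transpose_mat L * W)) $$ (i, n*p+l) = ((R1 n * B * Mi * transpose_mat L) * W) $$ (i, n*p+l)"
          using dms by (simp add: mat_alg)
        also have "\<dots> = (\<Sum>s<?D. (R1 n * B * Mi * transpose_mat L) $$ (i,s) * W $$ (s, n*p+l))"
          by (rule mult2_idx[of _ p ?D]) (use that nD dms in \<open>auto intro!: carrier_dimI\<close>)
        also have "\<dots> = 0"
          using W_entries_zero[OF Hic b1 b2 _ that(2) _ p, of "n-1" n] n unfolding W_def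
          by (intro sum.neutral) simp
        finally have z: "(R1 n * B * Mi * (transpose_mat L * W)) $$ (i, n*p+l) = 0" .
        have "R1 n $$ (i, n*p+l) = Rh1 n $$ (i, n*p+l)"
          using that nD[OF that(2)] p unfolding R1_def Rh1_def by (simp add: Rw_idx blu_diag[OF b1] blu_diag[OF bh1])
        thus ?thesis using z that nD[OF that(2)] dms unfolding Q_def by simp
      qed
      show "((Q - Rh1 n) * gram_trunc p (uhat p q xs \<kappa> \<beta> u) n) $$ (i, l*p+t) = 0" if "l < n" "i < p" "t < p" for l i t
      proof -
        have lt: "l*p+t < ?D" using blk_lt[OF that(3), of l n] that by simp
        have "(Q - Rh1 n) * (Gt + B * transpose_mat L) = Q * (Gt + B * transpose_mat L) - Rh1 n * (Gt + B * transpose_mat L)"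
          using dms by (simp add: minusmultd)
        thus ?thesis unfolding Gh using QY0[OF that] RY0[OF that] that lt dms by simp
      qed
    qed
    thus ?thesis by (rule sub_zero_eq[OF _ Qc Rc(3), symmetric])
  qed
  have F1: "bpoly p Sh1 n = bpoly p S1 n
          - const_pmat (pair_row p q \<kappa> \<beta> (bpoly p S1 n) * minv (Mmat p q xs \<kappa> \<beta> S1 H S2 (n - 1)))
            * jet01 p q xs \<kappa> (CDkernel p S1 H S2 (n - 1))"
  proof -
    have e1: "bpoly p Sh1 n = PM p n Q" using bpoly_PM[OF bh1 le_refl p] QR unfolding Rh1_def by simp
    have e2: "bpoly p S1 n = PM p n (R1 n)" using bpoly_PM[OF b1 le_refl p] unfolding R1_def by simp
    have e3: "pair_row p q \<kappa> \<beta> (PM p n (R1 n)) = R1 n * B" unfolding B_def R1_def by (rule pair_row_PM[OF Rw_carrier p])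
    have Hic': "\<forall>k\<le>n-1. minv (H k) \<in> carrier_mat p p" using Hic by auto
    have e4: "jet01 p q xs \<kappa> (CDkernel p S1 H S2 (n - 1)) = PM p n (transpose_mat L * W)"
      unfolding L_def W_def by (rule jet01_PM[OF p Hic' b1 b2]) simp
    have c1: "R1 n * B * Mi \<in> carrier_mat p ?K" using dms by (intro carrier_dimI) simp_all
    have c2: "transpose_mat L * W \<in> carrier_mat ?K ?D" using dms by (intro carrier_dimI) simp_all
    have c3: "R1 n * B * Mi * (transpose_mat L * W) \<in> carrier_mat p ?D" using dms by (intro carrier_dimI) simp_all
    show ?thesis unfolding e1 e3 e2 e4 Mi_def[symmetric] const_PM[OF c1 c2] PM_minus[OF Rc(1) c3] Q_def ..
  qed
  define V where "V = transpose_mat (R2 n) - W * B * Mi * (transpose_mat L * transpose_mat (R2 n))"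
  have Vc: "V \<in> carrier_mat ?D p" unfolding V_def by (intro carrier_dimI) (simp_all add: dms)
  have Vd: "dim_row V = ?D" "dim_col V = p" using Vc by auto
  note dms = dms Vd
  have Hi': "\<forall>k. minv (H k) \<in> carrier_mat p p \<and> H k * minv (H k) = 1\<^sub>m p" using Hi by auto
  have V1: "R1 l * (Gt + B * transpose_mat L) * V = 0\<^sub>m p p" if l: "l < n" for l
  proof -
    have g1: "R1 l * (Gt * transpose_mat (R2 n)) = 0\<^sub>m p p"
      using gauss_blocks_r[OF gf u_dim p, of l n n] l unfolding R1_def R2_def Gt_def by simp
    have g2: "R1 l * (Gt * W) = R1 l"
    proof -
      have "l \<le> n - 1" using l by simp
      thus ?thesis using W_left[OF gf u_dim p Hi', of "n-1" n l] l unfolding W_def Gt_def R1_def by simp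
    qed
    show ?thesis unfolding V_def by (rule core_orth2[OF Rc(1) Rc(2) Gc Bc Lc Wc Mi(1) g1 g2 Mi(2)])
  qed
  have Rh2_orth: "Rh1 l * (Gt + B * transpose_mat L) * transpose_mat (Rh2 n) = 0\<^sub>m p p" if l: "l < n" for l
    using gauss_blocks[OF gfh uh_dim p, of l n n] l unfolding Rh1_def Rh2_def Gh by simp
  define uT where "uT = (\<lambda>a b. transpose_mat (uhat p q xs \<kappa> \<beta> u b a))"
  have GT: "gram_trunc p uT n = transpose_mat (Gt + B * transpose_mat L)"
    unfolding uT_def Gh[symmetric] by (rule gram_transpose[OF uh_dim p])
  have VY0: "(transpose_mat V * transpose_mat (Gt + B * transpose_mat L)) $$ (i, l*p+t) = 0" if "l < n" "i < p" "t < p" for l i t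
  proof (rule conv_tri[OF _ b1 p _ _ that])
    show "transpose_mat V * transpose_mat (Gt + B * transpose_mat L) \<in> carrier_mat p ((n+1)*p)" by (intro carrier_dimI) (simp_all add: dms)
    show "n \<le> n + 1" by simp
    show "transpose_mat V * transpose_mat (Gt + B * transpose_mat L) * transpose_mat (Rw p n S1 l') = 0\<^sub>m p p" if "l' < n" for l'
    proof -
      have "transpose_mat V * transpose_mat (Gt + B * transpose_mat L) * transpose_mat (Rw p n S1 l') = transpose_mat (R1 l' * (Gt + B * transpose_mat L) * V)"
        unfolding R1_def by (rule tr3[symmetric, OF Rw_carrier Ghc Vc])
      thus ?thesis using V1[OF that] by simp
    qed
  qed
  have RY0': "(Rh2 n * transpose_mat (Gt + B * transpose_mat L)) $$ (i, l*p+t) = 0" if "l < n" "i < p" "t < p" for l i t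
  proof (rule conv_tri[OF _ bh1 p _ _ that])
    show "Rh2 n * transpose_mat (Gt + B * transpose_mat L) \<in> carrier_mat p ((n+1)*p)" by (intro carrier_dimI) (simp_all add: dms)
    show "n \<le> n + 1" by simp
    show "Rh2 n * transpose_mat (Gt + B * transpose_mat L) * transpose_mat (Rw p n Sh1 l') = 0\<^sub>m p p" if "l' < n" for l'
    proof -
      have tRc: "transpose_mat (Rh2 n) \<in> carrier_mat ?D p" using Rc(4) by auto
      have "transpose_mat (transpose_mat (Rh2 n)) * transpose_mat (Gt + B * transpose_mat L) * transpose_mat (Rw p n Sh1 l') = transpose_mat (Rh1 l' * (Gt + B * transpose_mat L) * transpose_mat (Rh2 n))"
        unfolding Rh1_def by (rule tr3[symmetric, OF Rw_carrier Ghc tRc])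
      thus ?thesis using Rh2_orth[OF that] by simp
    qed
  qed
  have VR: "Rh2 n = transpose_mat V"
  proof -
    have Dc: "transpose_mat V - Rh2 n \<in> carrier_mat p ?D" by (intro carrier_dimI) (simp_all add: dms)
    have "transpose_mat V - Rh2 n = 0\<^sub>m p ?D"
    proof (rule uniq_row0[OF p n _ Dc])
      have "gram_trunc p uT (n-1) = transpose_mat (gram_trunc p (uhat p q xs \<kappa> \<beta> u) (n-1))"
        unfolding uT_def by (rule gram_transpose[OF uh_dim p])
      thus "det (gram_trunc p uT (n - 1)) \<noteq> 0" using qd_hat det_transpose[OF gram_carrier] unfolding quasidefinite_def by metis
      show "(transpose_mat V - Rh2 n) $$ (i, n*p+l) = 0" if "i < p" "l < p" for i l
      proof -
        have "(W * B * Mi * (transpose_mat L * transpose_mat (R2 n))) $$ (n*p+l, i) = (W * (B * Mi * (transpose_mat L * transpose_mat (R2 n)))) $$ (n*p+l, i)"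
          using dms by (simp add: mat_alg)
        also have "\<dots> = (\<Sum>s<?D. W $$ (n*p+l, s) * (B * Mi * (transpose_mat L * transpose_mat (R2 n))) $$ (s,i))"
          by (rule mult2_idx[of _ ?D ?D _ p]) (use that nD dms in \<open>auto intro!: carrier_dimI\<close>)
        also have "\<dots> = 0"
          using W_entries_zero[OF Hic b1 b2 _ that(2) _ p, of "n-1" n] n unfolding W_def
          by (intro sum.neutral) simp
        finally have z: "(W * B * Mi * (transpose_mat L * transpose_mat (R2 n))) $$ (n*p+l, i) = 0" .
        have "R2 n $$ (i, n*p+l) = Rh2 n $$ (i, n*p+l)"
          using that nD[OF that(2)] p unfolding R2_def Rh2_def by (simp add: Rw_idx blu_diag[OF b2] blu_diag[OF bh2])
        thus ?thesis using z that nD[OF that(2)] dms unfolding V_def by simp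
      qed
      show "((transpose_mat V - Rh2 n) * gram_trunc p uT n) $$ (i, l*p+t) = 0" if "l < n" "i < p" "t < p" for l i t
      proof -
        have lt: "l*p+t < ?D" using blk_lt[OF that(3), of l n] that by simp
        have "(transpose_mat V - Rh2 n) * transpose_mat (Gt + B * transpose_mat L) = transpose_mat V * transpose_mat (Gt + B * transpose_mat L) - Rh2 n * transpose_mat (Gt + B * transpose_mat L)"
          using dms by (simp add: minusmultd)
        thus ?thesis unfolding GT using VY0[OF that] RY0'[OF that] that lt dms by simp
      qed
    qed
    thus ?thesis by (rule sub_zero_eq[OF _ _ Rc(4), symmetric]) (intro carrier_dimI, simp_all add: dms)
  qed
  have F2: "\<forall>y::complex. transpose_mat (meval (bpoly p Sh2 n) y) = transpose_mat (meval (bpoly p S2 n) y)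
          - pair_row p q \<kappa> \<beta> (kernel_at_y (CDkernel p S1 H S2 (n - 1)) y)
            * minv (Mmat p q xs \<kappa> \<beta> S1 H S2 (n - 1)) * transpose_mat (jet p q xs \<kappa> (bpoly p S2 n))"
  proof
    fix y :: complex
    define X where "X = Xy p n y"
    have Xd: "dim_row X = ?D" "dim_col X = p" unfolding X_def by simp_all
    have Hic': "\<forall>k\<le>n-1. minv (H k) \<in> carrier_mat p p" using Hic by auto
    have e1: "meval (bpoly p Sh2 n) y = Rh2 n * X"
      using bpoly_PM[OF bh2 le_refl p] meval_PM[OF Rw_carrier p] unfolding Rh2_def X_def by simp
    have e2: "meval (bpoly p S2 n) y = R2 n * X"
      using bpoly_PM[OF b2 le_refl p] meval_PM[OF Rw_carrier p] unfolding R2_def X_def by simp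
    have e3: "kernel_at_y (CDkernel p S1 H S2 (n - 1)) y = PM p n (transpose_mat X * W)"
      unfolding X_def W_def by (rule kernel_at_y_PM[OF p Hic' b1 b2]) simp
    have c3: "transpose_mat X * W \<in> carrier_mat p ?D" by (intro carrier_dimI) (simp_all add: dms Xd)
    have e4: "pair_row p q \<kappa> \<beta> (PM p n (transpose_mat X * W)) = transpose_mat X * W * B"
      unfolding B_def by (rule pair_row_PM[OF c3 p])
    have e5: "jet p q xs \<kappa> (bpoly p S2 n) = R2 n * L"
      using bpoly_PM[OF b2 le_refl p] jet_PM[OF Rw_carrier p] unfolding R2_def L_def by simp
    show "transpose_mat (meval (bpoly p Sh2 n) y) = transpose_mat (meval (bpoly p S2 n) y)
          - pair_row p q \<kappa> \<beta> (kernel_at_y (CDkernel p S1 H S2 (n - 1)) y)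
            * minv (Mmat p q xs \<kappa> \<beta> S1 H S2 (n - 1)) * transpose_mat (jet p q xs \<kappa> (bpoly p S2 n))"
    proof -
      have Xc: "X \<in> carrier_mat ?D p" using Xd by auto
      have t1: "transpose_mat (Rh2 n * X) = transpose_mat X * V"
        using transpose_mult[OF Rc(4) Xc, of n] VR by simp
      have t2: "transpose_mat (R2 n * X) = transpose_mat X * transpose_mat (R2 n)"
        using transpose_mult[OF Rc(2) Xc, of n] by simp
      have t3: "transpose_mat (R2 n * L) = transpose_mat L * transpose_mat (R2 n)"
        using transpose_mult[OF Rc(2) Lc, of n] by simp
      show ?thesis
        unfolding e1 e2 e3 e4 e5 Mi_def[symmetric] t1 t2 t3 V_def
        using dms Xd by (simp add: mat_alg)
    qed
  qed
  have F3: "Hh n = H n + pair_row p q \<kappa> \<beta> (bpoly p S1 n) * minv (Mmat p q xs \<kappa> \<beta> S1 H S2 (n - 1))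
            * transpose_mat (jet p q xs \<kappa> (bpoly p S2 n))"
  proof -
    have h1: "R1 n * (Gt * transpose_mat (R2 n)) = H n"
      using gauss_blocks_r[OF gf u_dim p, of n n n] unfolding R1_def R2_def Gt_def by simp
    have h2: "W * (Gt * transpose_mat (R2 n)) = 0\<^sub>m ?D p"
    proof -
      have "\<not> n \<le> n - 1" using n by simp
      thus ?thesis using W_right[OF gf u_dim p, of "n-1" n n] Hi n unfolding W_def Gt_def R2_def by simp
    qed
    have QW: "Q * (Gt + B * transpose_mat L) * W = 0\<^sub>m p ?D"
    proof -
      have Yc: "Q * (Gt + B * transpose_mat L) \<in> carrier_mat p ?D" by (intro carrier_dimI) (simp_all add: dms)
      have "\<forall>k\<le>n-1. Q * (Gt + B * transpose_mat L) * transpose_mat (Rw p n S2 k) = 0\<^sub>m p p"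
        using Q1 n unfolding R2_def by auto
      thus ?thesis unfolding W_def by (rule W_kill[OF Hic Yc])
    qed
    have "Hh n = Rh1 n * (Gt + B * transpose_mat L) * transpose_mat (Rh2 n)"
      using gauss_blocks[OF gfh uh_dim p, of n n n] unfolding Rh1_def Rh2_def Gh by simp
    also have "\<dots> = H n + R1 n * B * Mi * (transpose_mat L * transpose_mat (R2 n))"
      unfolding QR VR transpose_transpose Q_def V_def
      by (rule core_H[OF Rc(1) Rc(2) Gc Bc Lc Wc Mi(1) _ h1 h2 Mi(3) QW[unfolded Q_def]]) (use Hc in auto)
    also have "\<dots> = H n + pair_row p q \<kappa> \<beta> (bpoly p S1 n) * minv (Mmat p q xs \<kappa> \<beta> S1 H S2 (n - 1))
            * transpose_mat (jet p q xs \<kappa> (bpoly p S2 n))"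
    proof -
      have e2: "bpoly p S1 n = PM p n (R1 n)" using bpoly_PM[OF b1 le_refl p] unfolding R1_def by simp
      have e3: "pair_row p q \<kappa> \<beta> (PM p n (R1 n)) = R1 n * B" unfolding B_def R1_def by (rule pair_row_PM[OF Rw_carrier p])
      have e5: "jet p q xs \<kappa> (bpoly p S2 n) = R2 n * L"
        using bpoly_PM[OF b2 le_refl p] jet_PM[OF Rw_carrier p] unfolding R2_def L_def by simp
      show ?thesis unfolding e2 e3 e5 Mi_def[symmetric] using transpose_mult[OF Rc(2) Lc, of n] by simp
    qed
    finally show ?thesis .
  qed
  show ?thesis using F1 F2 F3 by blast

qed

theorem mainTheorem5:
  fixes p q :: nat and xs :: "nat \<Rightarrow> real" and \<kappa> :: "nat \<Rightarrow> nat"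
    and \<beta> :: "nat \<Rightarrow> nat \<Rightarrow> nat \<Rightarrow> complex mat"
    and u :: "nat \<Rightarrow> nat \<Rightarrow> complex mat"
    and S1 S2 Sh1 Sh2 :: "nat \<Rightarrow> nat \<Rightarrow> complex mat" and H Hh :: "nat \<Rightarrow> complex mat"
  assumes p: "p \<ge> 1"
    and nodes: "inj_on xs {..<q}"
    and kappa: "\<forall>j<q. \<kappa> j \<ge> 1"
    and beta_dim: "\<forall>j<q. \<forall>m<\<kappa> j. \<forall>r. \<beta> j m r \<in> carrier_mat p p"
    and u_dim: "\<forall>a b. u a b \<in> carrier_mat p p"
    and qd: "quasidefinite p u"
    and qd_hat: "quasidefinite p (uhat p q xs \<kappa> \<beta> u)"
    and fact: "gauss_factorization p u S1 H S2"
    and fact_hat: "gauss_factorization p (uhat p q xs \<kappa> \<beta> u) Sh1 Hh Sh2"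
    and indep: "beta_lin_indep p q \<kappa> \<beta>"
    and perp: "perpR p u (KerR p q \<kappa> \<beta>) = {0\<^sub>m p p} \<or> perpL p u (Iideal p q xs \<kappa>) = {0\<^sub>m p p}"
  shows "(\<forall>n. det (Mmat p q xs \<kappa> \<beta> S1 H S2 n) \<noteq> 0)
    \<and> (\<forall>n\<ge>1.
        bpoly p Sh1 n = bpoly p S1 n
          - const_pmat (pair_row p q \<kappa> \<beta> (bpoly p S1 n) * minv (Mmat p q xs \<kappa> \<beta> S1 H S2 (n - 1)))
            * jet01 p q xs \<kappa> (CDkernel p S1 H S2 (n - 1))
      \<and> (\<forall>y::complex. transpose_mat (meval (bpoly p Sh2 n) y) = transpose_mat (meval (bpoly p S2 n) y)
          - pair_row p q \<kappa> \<beta> (kernel_at_y (CDkernel p S1 H S2 (n - 1)) y)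
            * minv (Mmat p q xs \<kappa> \<beta> S1 H S2 (n - 1)) * transpose_mat (jet p q xs \<kappa> (bpoly p S2 n)))
      \<and> Hh n = H n + pair_row p q \<kappa> \<beta> (bpoly p S1 n) * minv (Mmat p q xs \<kappa> \<beta> S1 H S2 (n - 1))
            * transpose_mat (jet p q xs \<kappa> (bpoly p S2 n)))"
proof -
  have p0: "p > 0" using p by simp
  have Hc: "\<forall>k. H k \<in> carrier_mat p p" using fact unfolding gauss_factorization_def by auto
  have Hdet: "det (H k) \<noteq> 0" for k by (rule H_det[OF fact u_dim p0 qd])
  have Hi: "\<forall>k. minv (H k) \<in> carrier_mat p p \<and> H k * minv (H k) = 1\<^sub>m p \<and> minv (H k) * H k = 1\<^sub>m p"
    using minv_props Hc Hdet by blast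
  have A: "\<forall>n. det (Mmat p q xs \<kappa> \<beta> S1 H S2 n) \<noteq> 0"
    using M_det[OF p0 fact u_dim qd_hat Hi] by blast
  have B: "\<forall>n\<ge>1.
        bpoly p Sh1 n = bpoly p S1 n
          - const_pmat (pair_row p q \<kappa> \<beta> (bpoly p S1 n) * minv (Mmat p q xs \<kappa> \<beta> S1 H S2 (n - 1)))
            * jet01 p q xs \<kappa> (CDkernel p S1 H S2 (n - 1))
      \<and> (\<forall>y::complex. transpose_mat (meval (bpoly p Sh2 n) y) = transpose_mat (meval (bpoly p S2 n) y)
          - pair_row p q \<kappa> \<beta> (kernel_at_y (CDkernel p S1 H S2 (n - 1)) y)
            * minv (Mmat p q xs \<kappa> \<beta> S1 H S2 (n - 1)) * transpose_mat (jet p q xs \<kappa> (bpoly p S2 n)))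
      \<and> Hh n = H n + pair_row p q \<kappa> \<beta> (bpoly p S1 n) * minv (Mmat p q xs \<kappa> \<beta> S1 H S2 (n - 1))
            * transpose_mat (jet p q xs \<kappa> (bpoly p S2 n))"
  proof (intro allI impI)
    fix n :: nat assume n: "n \<ge> 1"
    show "bpoly p Sh1 n = bpoly p S1 n
          - const_pmat (pair_row p q \<kappa> \<beta> (bpoly p S1 n) * minv (Mmat p q xs \<kappa> \<beta> S1 H S2 (n - 1)))
            * jet01 p q xs \<kappa> (CDkernel p S1 H S2 (n - 1))
      \<and> (\<forall>y::complex. transpose_mat (meval (bpoly p Sh2 n) y) = transpose_mat (meval (bpoly p S2 n) y)
          - pair_row p q \<kappa> \<beta> (kernel_at_y (CDkernel p S1 H S2 (n - 1)) y)
            * minv (Mmat p q xs \<kappa> \<beta> S1 H S2 (n - 1)) * transpose_mat (jet p q xs \<kappa> (bpoly p S2 n)))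
      \<and> Hh n = H n + pair_row p q \<kappa> \<beta> (bpoly p S1 n) * minv (Mmat p q xs \<kappa> \<beta> S1 H S2 (n - 1))
            * transpose_mat (jet p q xs \<kappa> (bpoly p S2 n))"
      by (rule formulas[OF p0 n fact fact_hat u_dim qd_hat Hi A[rule_format]])
  qed
  show ?thesis using A B by blast
qed

end
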